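(* Let $D_K$ be a relative $K$-entropy satisfying Properties (a), (b), (c) and (d) below, and let $H_K$ be the associated conditional entropy, defined by one of the two forms below. Then for every POVM $X=\{X_j\}$ on $\mathcal{H}_A$ and every density operator $\rho_{AB}$, $H_K(X|B)\ge0$, with equality if the operators $\mathrm{Tr}_A(X_j\rho_{AB})$ (for the different $j$) have mutually orthogonal supports.
   Context: All Hilbert spaces are finite-dimensional; $\log$ has an arbitrary but fixed base. A relative $K$-entropy $D_K$ assigns to every pair $(S,T)$ of positive semidefinite operators on a common Hilbert space an extended real number $D_K(S\|T)$. Properties: (a) for every trace-preserving completely positive map $\mathcal{E}$ (possibly between different spaces), $D_K(\mathcal{E}(S)\|\mathcal{E}(T))\le D_K(S\|T)$; (b) for positive semidefinite $S,T$ on $\mathcal{H}$ and $T'$ on $\mathcal{H}'$, $D_K(S\oplus 0\,\|\,T\oplus T')=D_K(S\|T)$; (c) for every constant $c>0$, $D_K(S\|cT)=D_K(S\|T)+\log\frac1c$; (d) $D_K(\rho\|\rho)=0$ for every density operator $\rho$. The conditional $K$-entropy of a density operator $\rho_{AB}$ is either $H_K(A|B)=-D_K(\rho_{AB}\|\mathbb{1}_A\otimes\rho_B)$ for all $\rho_{AB}$, or $H_K(A|B)=\max_{\sigma_B}[-D_K(\rho_{AB}\|\mathbb{1}_A\otimes\sigma_B)]$ for all $\rho_{AB}$, maximum over density operators $\sigma_B$. For a POVM $X=\{X_j\}$ on $\mathcal{H}_A$ ($X_j\ge0$, $\sum_jX_j=\mathbb{1}$), let $\mathcal{X}:\rho_A\mapsto\sum_j|j\rangle\langle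 j|_X\,\mathrm{Tr}(X_j\rho_A)$ with $\{|j\rangle\}$ orthonormal in a register $\mathcal{H}_X$; $H_K(X|B)$ denotes $H_K$ of the state $(\mathcal{X}\otimes\mathcal{I})(\rho_{AB})$ (register $X$ given $B$). *)

theory Defs
  imports Complex_Main "HOL-Library.Extended_Real" "Jordan_Normal_Form.Matrix"
begin

text \<open>Operators on the Hilbert space C^n are complex n x n matrices.
  Bipartite spaces H_A (x) H_B are C^(dA*dB) with index (a,b) stored at a*dB+b.\<close>

definition mtrace :: "complex mat \<Rightarrow> complex" where
  "mtrace M = (\<Sum>i<dim_row M. M $$ (i,i))"

definition psd :: "nat \<Rightarrow> complex mat \<Rightarrow> bool" where
  "psd n M \<longleftrightarrow> M \<in> carrier_mat n n \<and>
     (\<forall>v \<in> carrier_vec n. Im ((M *\<^sub>v v) \<bullet>c v) = 0 \<and> Re ((M *\<^sub>v v) \<bullet>c v) \<ge> 0)"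

definition density :: "nat \<Rightarrow> complex mat \<Rightarrow> bool" where
  "density n M \<longleftrightarrow> psd n M \<and> mtrace M = 1"

definition kron :: "complex mat \<Rightarrow> complex mat \<Rightarrow> complex mat" where
  "kron A B = mat (dim_row A * dim_row B) (dim_col A * dim_col B)
     (\<lambda>(i,j). A $$ (i div dim_row B, j div dim_col B) * B $$ (i mod dim_row B, j mod dim_col B))"

definition ptrA :: "nat \<Rightarrow> nat \<Rightarrow> complex mat \<Rightarrow> complex mat" where
  "ptrA dA dB M = mat dB dB (\<lambda>(i,j). \<Sum>k<dA. M $$ (k*dB + i, k*dB + j))"

text \<open>(Phi (x) I_B)(M) for a map Phi from operators on C^dA to operators on C^dA',
  applied to an operator M on C^dA (x) C^dB (the linear extension, blockwise).\<close>
definition liftA :: "(complex mat \<Rightarrow> complex mat) \<Rightarrow> nat \<Rightarrow> nat \<Rightarrow> nat \<Rightarrow> complex mat \<Rightarrow> complex mat" where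
  "liftA Phi dA dA' dB M = mat (dA' * dB) (dA' * dB) (\<lambda>(i,j).
     Phi (mat dA dA (\<lambda>(a,a'). M $$ (a*dB + i mod dB, a'*dB + j mod dB))) $$ (i div dB, j div dB))"

definition cptp :: "nat \<Rightarrow> nat \<Rightarrow> (complex mat \<Rightarrow> complex mat) \<Rightarrow> bool" where
  "cptp n m E \<longleftrightarrow>
     (\<forall>A \<in> carrier_mat n n. E A \<in> carrier_mat m m) \<and>
     (\<forall>A \<in> carrier_mat n n. \<forall>B \<in> carrier_mat n n. E (A + B) = E A + E B) \<and>
     (\<forall>A \<in> carrier_mat n n. \<forall>c. E (c \<cdot>\<^sub>m A) = c \<cdot>\<^sub>m E A) \<and>
     (\<forall>A \<in> carrier_mat n n. mtrace (E A) = mtrace A) \<and>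
     (\<forall>k M. psd (n * k) M \<longrightarrow> psd (m * k) (liftA E n m k M))"

definition relK :: "real \<Rightarrow> (complex mat \<Rightarrow> complex mat \<Rightarrow> ereal) \<Rightarrow> bool" where
  "relK b D \<longleftrightarrow>
    (\<forall>n m E S T. cptp n m E \<and> psd n S \<and> psd n T \<longrightarrow> D (E S) (E T) \<le> D S T) \<and>
    (\<forall>n n' S T T'. psd n S \<and> psd n T \<and> psd n' T' \<longrightarrow>
       D (four_block_mat S (0\<^sub>m n n') (0\<^sub>m n' n) (0\<^sub>m n' n'))
         (four_block_mat T (0\<^sub>m n n') (0\<^sub>m n' n) T') = D S T) \<and>
    (\<forall>n S T (c::real). psd n S \<and> psd n T \<and> c > 0 \<longrightarrow>
       D S (complex_of_real c \<cdot>\<^sub>m T) = D S T + ereal (log b (1 / c))) \<and>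
    (\<forall>n \<rho>. density n \<rho> \<longrightarrow> D \<rho> \<rho> = 0)"

text \<open>Conditional K-entropy H_K(A|B) of an operator rho on C^dA (x) C^dB.
  If the flag is True: first form -D(rho || 1_A (x) rho_B);
  if False: second form, sup (= max) over density operators sigma_B.\<close>
definition HK :: "bool \<Rightarrow> (complex mat \<Rightarrow> complex mat \<Rightarrow> ereal) \<Rightarrow> nat \<Rightarrow> nat \<Rightarrow> complex mat \<Rightarrow> ereal" where
  "HK first D dA dB \<rho> =
     (if first then - D \<rho> (kron (1\<^sub>m dA) (ptrA dA dB \<rho>))
      else (SUP \<sigma> \<in> {\<sigma>. density dB \<sigma>}. - D \<rho> (kron (1\<^sub>m dA) \<sigma>)))"

definition povm :: "nat \<Rightarrow> nat \<Rightarrow> (nat \<Rightarrow> complex mat) \<Rightarrow> bool" where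
  "povm dA m X \<longleftrightarrow> (\<forall>j<m. psd dA (X j)) \<and>
     (\<forall>i<dA. \<forall>i'<dA. (\<Sum>j<m. X j $$ (i,i')) = (if i = i' then 1 else 0))"

definition meas :: "nat \<Rightarrow> (nat \<Rightarrow> complex mat) \<Rightarrow> complex mat \<Rightarrow> complex mat" where
  "meas m X \<rho> = mat m m (\<lambda>(i,j). if i = j then mtrace (X i * \<rho>) else 0)"

text \<open>Support (= range, for psd operators) of P and Q on C^n are orthogonal.\<close>
definition orth_supp :: "nat \<Rightarrow> complex mat \<Rightarrow> complex mat \<Rightarrow> bool" where
  "orth_supp n P Q \<longleftrightarrow> (\<forall>u \<in> carrier_vec n. \<forall>v \<in> carrier_vec n. (P *\<^sub>v u) \<bullet>c (Q *\<^sub>v v) = 0)"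

end

theory Submission
  imports Defs
begin

lemma sum_split_prod:
  fixes f :: "nat \<Rightarrow> 'a::comm_monoid_add"
  shows "(\<Sum>i<a*b. f i) = (\<Sum>x<a. \<Sum>y<b. f (x*b+y))"
proof (induction a)
  case 0 then show ?case by simp
next
  case (Suc a)
  have "(\<Sum>i<Suc a*b. f i) = (\<Sum>i<a*b. f i) + (\<Sum>i\<in>{a*b..<a*b+b}. f i)"
    by (simp add: lessThan_atLeast0 sum.atLeastLessThan_concat add.commute)
  also have "(\<Sum>i\<in>{a*b..<a*b+b}. f i) = (\<Sum>y<b. f (a*b+y))"
    using sum.shift_bounds_nat_ivl[of f 0 "a*b" b] by (simp add: lessThan_atLeast0 add.commute)
  finally show ?case using Suc by simp
qed

definition hf :: "nat \<Rightarrow> (nat \<Rightarrow> nat \<Rightarrow> complex) \<Rightarrow> (nat \<Rightarrow> complex) \<Rightarrow> complex" where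
  "hf n p v = (\<Sum>i<n. \<Sum>l<n. cnj (v i) * p i l * v l)"

definition psdf :: "nat \<Rightarrow> (nat \<Rightarrow> nat \<Rightarrow> complex) \<Rightarrow> bool" where
  "psdf n p \<longleftrightarrow> (\<forall>v. hf n p v \<ge> 0)"

lemma qf_eq: assumes "M \<in> carrier_mat n n"
  shows "(M *\<^sub>v vec n v) \<bullet>c vec n v = hf n (\<lambda>i l. M $$ (i,l)) v"
  using assms unfolding hf_def
  by (auto simp: scalar_prod_def mult_mat_vec_def sum_distrib_left sum_distrib_right
      intro!: sum.cong simp: ac_simps)

lemma psd_iff: "psd n M \<longleftrightarrow> M \<in> carrier_mat n n \<and> psdf n (\<lambda>i l. M $$ (i,l))"
proof
  assume "psd n M"
  then have M: "M \<in> carrier_mat n n" and h: "\<And>w. w \<in> carrier_vec n \<Longrightarrow>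
     Im ((M *\<^sub>v w) \<bullet>c w) = 0 \<and> Re ((M *\<^sub>v w) \<bullet>c w) \<ge> 0" unfolding psd_def by auto
  show "M \<in> carrier_mat n n \<and> psdf n (\<lambda>i l. M $$ (i,l))"
  proof (intro conjI M, unfold psdf_def, intro allI)
    fix v
    have "Im ((M *\<^sub>v vec n v) \<bullet>c vec n v) = 0 \<and> Re ((M *\<^sub>v vec n v) \<bullet>c vec n v) \<ge> 0"
      using h[of "vec n v"] by auto
    then show "hf n (\<lambda>i l. M $$ (i,l)) v \<ge> 0" using qf_eq[OF M] by (simp add: less_eq_complex_def)
  qed
next
  assume a: "M \<in> carrier_mat n n \<and> psdf n (\<lambda>i l. M $$ (i,l))"
  show "psd n M" unfolding psd_def
  proof (intro conjI ballI)
    show "M \<in> carrier_mat n n" using a by auto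
  next
    fix w :: "complex vec" assume w: "w \<in> carrier_vec n"
    then have "w = vec n (\<lambda>i. w $ i)" by auto
    then have "(M *\<^sub>v w) \<bullet>c w = hf n (\<lambda>i l. M $$ (i,l)) (\<lambda>i. w $ i)"
      using qf_eq[of M n "\<lambda>i. w $ i"] a by metis
    then have "(M *\<^sub>v w) \<bullet>c w \<ge> 0" using a unfolding psdf_def by metis
    then show "Im ((M *\<^sub>v w) \<bullet>c w) = 0" "0 \<le> Re ((M *\<^sub>v w) \<bullet>c w)"
      by (simp_all add: less_eq_complex_def)
  qed
qed

lemma hf_supp:
  assumes "S \<subseteq> {..<n}" "\<And>j. j \<notin> S \<Longrightarrow> v j = 0"
  shows "hf n p v = (\<Sum>i\<in>S. \<Sum>l\<in>S. cnj (v i) * p i l * v l)"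
proof -
  have fS: "finite S" using assms(1) finite_subset by blast
  have "hf n p v = (\<Sum>i\<in>S. \<Sum>l<n. cnj (v i) * p i l * v l)"
    unfolding hf_def by (rule sum.mono_neutral_right) (use assms in auto)
  also have "\<dots> = (\<Sum>i\<in>S. \<Sum>l\<in>S. cnj (v i) * p i l * v l)"
    by (rule sum.cong[OF refl], rule sum.mono_neutral_right) (use assms in auto)
  finally show ?thesis .
qed

lemma hf_2pt:
  assumes "a < n" "b < n" "a \<noteq> b"
  shows "hf n p (\<lambda>j. if j = a then c else if j = b then d else 0) =
    cnj c * p a a * c + cnj c * p a b * d + cnj d * p b a * c + cnj d * p b b * d"
  by (subst hf_supp[of "{a,b}"]) (use assms in auto)

lemma hf_1pt:
  assumes "a < n"
  shows "hf n p (\<lambda>j. if j = a then c else 0) = cnj c * p a a * c"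
  by (subst hf_supp[of "{a}"]) (use assms in auto)

lemma psdf_diag: assumes "psdf n p" "a < n" shows "p a a \<ge> 0"
  using assms(1) hf_1pt[OF assms(2), of p 1] unfolding psdf_def by (metis complex_cnj_one mult_1 mult.commute)

lemma psdf_herm: assumes "psdf n p" "a < n" "b < n" shows "p b a = cnj (p a b)"
proof (cases "a = b")
  case True
  then show ?thesis using psdf_diag[OF assms(1,2)] by (auto simp: less_eq_complex_def complex_eq_iff)
next
  case False
  have 1: "hf n p (\<lambda>j. if j = a then 1 else if j = b then 1 else 0) \<ge> 0"
    and 2: "hf n p (\<lambda>j. if j = a then 1 else if j = b then \<i> else 0) \<ge> 0"
    using assms unfolding psdf_def by auto
  have da: "p a a \<ge> 0" and db: "p b b \<ge> 0" using psdf_diag assms by auto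
  from 1 have "Im (p a a + p a b + p b a + p b b) = 0"
    using hf_2pt[OF assms(2,3) False, of p 1 1] by (simp add: less_eq_complex_def)
  moreover from 2 have "Im (p a a + \<i> * p a b - \<i> * p b a + p b b) = 0"
    using hf_2pt[OF assms(2,3) False, of p 1 "\<i>"] by (simp add: less_eq_complex_def algebra_simps)
  ultimately show ?thesis using da db by (auto simp: less_eq_complex_def complex_eq_iff)
qed

lemma real_lin_nonneg: assumes "\<And>s::real. A + s * B \<ge> 0" shows "B = 0"
proof (rule ccontr)
  assume "B \<noteq> 0"
  have "A + (-(\<bar>A\<bar>+1)/B) * B \<ge> 0" by (rule assms)
  moreover have "(-(\<bar>A\<bar>+1)/B) * B = -(\<bar>A\<bar>+1)" using \<open>B \<noteq> 0\<close> by simp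
  ultimately show False by (smt (verit) abs_ge_self)
qed

lemma psdf_zero_diag: assumes "psdf n p" "a < n" "p a a = 0" "l < n"
  shows "p a l = 0" "p l a = 0"
proof -
  show "p a l = 0"
  proof (cases "l = a")
    case True then show ?thesis using assms by simp
  next
    case False
    have h: "p l a = cnj (p a l)" using psdf_herm assms by auto
    have "\<And>s::real. Re (p l l) + s * (2 * Re (p a l)) \<ge> 0"
    proof -
      fix s :: real
      have "hf n p (\<lambda>j. if j = a then of_real s else if j = l then 1 else 0) \<ge> 0"
        using assms unfolding psdf_def by auto
      then show "Re (p l l) + s * (2 * Re (p a l)) \<ge> 0"
        using hf_2pt[OF assms(2,4) False[symmetric], of p "of_real s" 1] assms(3) h
        by (simp add: less_eq_complex_def algebra_simps)
    qed
    then have r: "Re (p a l) = 0" using real_lin_nonneg[of "Re (p l l)" "2 * Re (p a l)"] by simp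
    have "\<And>s::real. Re (p l l) + s * (2 * Im (p a l)) \<ge> 0"
    proof -
      fix s :: real
      have "hf n p (\<lambda>j. if j = a then \<i> * of_real s else if j = l then 1 else 0) \<ge> 0"
        using assms unfolding psdf_def by auto
      then show "Re (p l l) + s * (2 * Im (p a l)) \<ge> 0"
        using hf_2pt[OF assms(2,4) False[symmetric], of p "\<i> * of_real s" 1] assms(3) h
        by (simp add: less_eq_complex_def algebra_simps)
    qed
    then have "Im (p a l) = 0" using real_lin_nonneg[of "Re (p l l)" "2 * Im (p a l)"] by simp
    with r show ?thesis by (simp add: complex_eq_iff)
  qed
  then show "p l a = 0" using psdf_herm assms by (metis complex_cnj_zero)
qed

lemma sum_if_eq: assumes "(k::nat) < n" shows "(\<Sum>l<n. if l = k then g l else 0) = (g k :: 'a::comm_monoid_add)"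
  using assms by (subst sum.delta) auto
lemma sum_if_eq': assumes "(k::nat) < n" shows "(\<Sum>l<n. if k = l then g l else 0) = (g k :: 'a::comm_monoid_add)"
  using assms by (subst sum.delta') auto
lemma if0_mult: "(if c then a else 0) * (b::'a::mult_zero) = (if c then a * b else 0)" by simp
lemma mult_if0: "(b::'a::mult_zero) * (if c then a else 0) = (if c then b * a else 0)" by simp
lemma cnj_if0: "cnj (if c then a else 0) = (if c then cnj a else 0)" by simp

lemma sum_delta_r: assumes "(k::nat) < n"
  shows "(\<Sum>l<n. f l * (if l = k then t else 0)) = f k * (t::complex)"
  by (simp only: mult_if0) (rule sum_if_eq[OF assms])

lemma sum_delta_l: assumes "(k::nat) < n"
  shows "(\<Sum>l<n. (if l = k then t else 0) * f l) = t * (f k :: complex)"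
  by (simp only: if0_mult) (rule sum_if_eq[OF assms])

lemma hf_shift:
  assumes "k < n"
  shows "hf n p (\<lambda>i. v i + (if i = k then t else 0)) = hf n p v + cnj t * (\<Sum>l<n. p k l * v l)
     + (\<Sum>i<n. cnj (v i) * p i k) * t + cnj t * p k k * t"
proof -
  define e where "e = (\<lambda>i::nat. if i = k then t else 0)"
  have "hf n p (\<lambda>i. v i + e i) = (\<Sum>i<n. \<Sum>l<n. cnj (v i) * p i l * v l)
      + (\<Sum>i<n. \<Sum>l<n. (cnj (v i) * p i l) * e l) + (\<Sum>i<n. \<Sum>l<n. cnj (e i) * (p i l * v l))
      + (\<Sum>i<n. \<Sum>l<n. cnj (e i) * (p i l * e l))"
    unfolding hf_def by (simp add: algebra_simps sum.distrib)
  also have "(\<Sum>i<n. \<Sum>l<n. (cnj (v i) * p i l) * e l) = (\<Sum>i<n. cnj (v i) * p i k) * t"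
    unfolding e_def using assms by (simp add: sum_delta_r sum_distrib_right)
  also have "(\<Sum>i<n. \<Sum>l<n. cnj (e i) * (p i l * v l)) = cnj t * (\<Sum>l<n. p k l * v l)"
  proof -
    have "(\<Sum>i<n. \<Sum>l<n. cnj (e i) * (p i l * v l)) = (\<Sum>i<n. cnj (e i) * (\<Sum>l<n. p i l * v l))"
      by (simp add: sum_distrib_left)
    also have "\<dots> = cnj t * (\<Sum>l<n. p k l * v l)"
      unfolding e_def using assms by (simp add: cnj_if0 if0_mult sum_if_eq)
    finally show ?thesis .
  qed
  also have "(\<Sum>i<n. \<Sum>l<n. cnj (e i) * (p i l * e l)) = cnj t * p k k * t"
  proof -
    have "(\<Sum>i<n. \<Sum>l<n. cnj (e i) * (p i l * e l)) = (\<Sum>i<n. cnj (e i) * (\<Sum>l<n. p i l * e l))"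
      by (simp add: sum_distrib_left)
    also have "\<dots> = (\<Sum>i<n. cnj (e i) * (p i k * t))"
      unfolding e_def using assms by (simp add: sum_delta_r)
    also have "\<dots> = cnj t * p k k * t"
      unfolding e_def using assms by (simp add: cnj_if0 if0_mult sum_if_eq mult.assoc)
    finally show ?thesis .
  qed
  finally show ?thesis unfolding e_def hf_def by simp
qed

lemma psdf_schur:
  assumes p: "psdf n p" and k: "k < n" and c: "p k k \<noteq> 0"
  shows "psdf n (\<lambda>i l. p i l - p i k * p k l / p k k)"
  unfolding psdf_def
proof
  fix v
  let ?c = "p k k"
  define \<alpha> where "\<alpha> = (\<Sum>l<n. p k l * v l)"
  have cr: "cnj ?c = ?c" using psdf_diag[OF p k] by (simp add: less_eq_complex_def complex_eq_iff)
  have b: "(\<Sum>i<n. cnj (v i) * p i k) = cnj \<alpha>"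
    unfolding \<alpha>_def by (simp add: psdf_herm[OF p k] ac_simps)
  have "hf n (\<lambda>i l. p i l - p i k * p k l / p k k) v
     = hf n p v - (\<Sum>i<n. cnj (v i) * p i k) * \<alpha> / ?c"
    unfolding hf_def \<alpha>_def
    by (simp add: algebra_simps sum_subtractf sum_distrib_left sum_distrib_right sum_divide_distrib)
  also have "\<dots> = hf n p (\<lambda>i. v i + (if i = k then - \<alpha> / ?c else 0))"
  proof -
    have ct: "cnj (- \<alpha> / ?c) = - cnj \<alpha> / ?c" using cr by simp
    have "hf n p v - cnj \<alpha> * \<alpha> / ?c = hf n p v + (- cnj \<alpha> / ?c) * \<alpha> + cnj \<alpha> * (- \<alpha> / ?c)
       + (- cnj \<alpha> / ?c) * ?c * (- \<alpha> / ?c)" using c by (simp add: field_simps)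
    then show ?thesis unfolding hf_shift[OF k] b \<alpha>_def[symmetric] ct by simp
  qed
  also have "\<dots> \<ge> 0" using p unfolding psdf_def by blast
  finally show "hf n (\<lambda>i l. p i l - p i k * p k l / p k k) v \<ge> 0" .
qed

lemma psdf_decomp_aux:
  "k \<le> n \<Longrightarrow> psdf n p \<Longrightarrow> (\<forall>i l. i < n \<longrightarrow> l < n \<longrightarrow> (k \<le> i \<or> k \<le> l) \<longrightarrow> p i l = 0)
   \<Longrightarrow> \<exists>w. \<forall>i<n. \<forall>l<n. p i l = (\<Sum>s<k. w s i * cnj (w s l))"
proof (induction k arbitrary: p)
  case 0 then show ?case by auto
next
  case (Suc k)
  then have k: "k < n" by simp
  show ?case
  proof (cases "p k k = 0")
    case True
    have "\<forall>i l. i < n \<longrightarrow> l < n \<longrightarrow> (k \<le> i \<or> k \<le> l) \<longrightarrow> p i l = 0"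
    proof (intro allI impI)
      fix i l assume "i < n" "l < n" "k \<le> i \<or> k \<le> l"
      show "p i l = 0"
      proof (cases "i = k \<or> l = k")
        case True
        then show ?thesis using psdf_zero_diag[OF Suc.prems(2) k \<open>p k k = 0\<close>] \<open>i < n\<close> \<open>l < n\<close> by auto
      next
        case False
        then have "Suc k \<le> i \<or> Suc k \<le> l" using \<open>k \<le> i \<or> k \<le> l\<close> by auto
        then show ?thesis using Suc.prems(3) \<open>i < n\<close> \<open>l < n\<close> by blast
      qed
    qed
    then obtain w where w: "\<forall>i<n. \<forall>l<n. p i l = (\<Sum>s<k. w s i * cnj (w s l))"
      using Suc.IH[of p] Suc.prems by auto
    show ?thesis
    proof (rule exI[of _ "\<lambda>s. if s = k then (\<lambda>_. 0) else w s"], intro allI impI)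
      fix i l assume il: "i < n" "l < n"
      have "(\<Sum>s<Suc k. (if s = k then (\<lambda>_. 0) else w s) i * cnj ((if s = k then (\<lambda>_. 0) else w s) l))
         = (\<Sum>s<k. (if s = k then (\<lambda>_. 0) else w s) i * cnj ((if s = k then (\<lambda>_. 0) else w s) l))"
        by (simp only: sum.lessThan_Suc) simp
      also have "\<dots> = (\<Sum>s<k. w s i * cnj (w s l))" by (rule sum.cong) auto
      finally show "p i l = (\<Sum>s<Suc k. (if s = k then (\<lambda>_. 0) else w s) i * cnj ((if s = k then (\<lambda>_. 0) else w s) l))"
        using w il by simp
    qed
  next
    case False
    let ?c = "p k k"
    define q where "q = (\<lambda>i l. p i l - p i k * p k l / ?c)"
    have q: "psdf n q" unfolding q_def by (rule psdf_schur[OF Suc.prems(2) k False])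
    have "\<forall>i l. i < n \<longrightarrow> l < n \<longrightarrow> (k \<le> i \<or> k \<le> l) \<longrightarrow> q i l = 0"
    proof (intro allI impI)
      fix i l assume il: "i < n" "l < n" "k \<le> i \<or> k \<le> l"
      show "q i l = 0"
      proof (cases "i = k \<or> l = k")
        case True then show ?thesis unfolding q_def using False by auto
      next
        case F: False
        then have "Suc k \<le> i \<or> Suc k \<le> l" using il by auto
        then show ?thesis unfolding q_def using Suc.prems(3) il k by auto
      qed
    qed
    then obtain w where w: "\<forall>i<n. \<forall>l<n. q i l = (\<Sum>s<k. w s i * cnj (w s l))"
      using Suc.IH[of q] Suc.prems q by auto
    have cpos: "Re ?c > 0" and cre: "?c = of_real (Re ?c)"
      using psdf_diag[OF Suc.prems(2) k] False by (auto simp: less_eq_complex_def complex_eq_iff)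
    define r where "r = complex_of_real (sqrt (Re ?c))"
    have rr: "r * cnj r = ?c"
    proof -
      have "r * cnj r = of_real (sqrt (Re ?c) * sqrt (Re ?c))" unfolding r_def by (simp only: complex_cnj_complex_of_real of_real_mult)
      also have "\<dots> = of_real (Re ?c)" using cpos by simp
      finally show ?thesis using cre by simp
    qed
    have r0: "r \<noteq> 0" using rr False by auto
    show ?thesis
    proof (rule exI[of _ "\<lambda>s. if s = k then (\<lambda>i. p i k / r) else w s"], intro allI impI)
      fix i l assume il: "i < n" "l < n"
      have "(\<Sum>s<Suc k. (if s = k then (\<lambda>i. p i k / r) else w s) i * cnj ((if s = k then (\<lambda>i. p i k / r) else w s) l))
          = (\<Sum>s<k. (if s = k then (\<lambda>i. p i k / r) else w s) i * cnj ((if s = k then (\<lambda>i. p i k / r) else w s) l)) + p i k / r * cnj (p l k / r)"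
        by (simp only: sum.lessThan_Suc) simp
      also have "\<dots> = (\<Sum>s<k. w s i * cnj (w s l)) + p i k / r * cnj (p l k / r)"
        by (subst sum.cong[OF refl, of _ _ "\<lambda>s. w s i * cnj (w s l)"]) auto
      also have "\<dots> = q i l + p i k / r * cnj (p l k / r)"
        using w il by simp
      also have "\<dots> = q i l + p i k * p k l / ?c"
      proof -
        have h: "cnj (p l k) = p k l" using psdf_herm[OF Suc.prems(2) il(2) k] by simp
        have "p i k / r * cnj (p l k / r) = p i k * p k l / (r * cnj r)" using h by simp
        then show ?thesis using rr by simp
      qed
      also have "\<dots> = p i l" unfolding q_def by simp
      finally show "p i l = (\<Sum>s<Suc k. (if s = k then (\<lambda>i. p i k / r) else w s) i * cnj ((if s = k then (\<lambda>i. p i k / r) else w s) l))" by simp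
    qed
  qed
qed

lemma psdf_decomp: "psdf n p \<Longrightarrow> \<exists>w. \<forall>i<n. \<forall>l<n. p i l = (\<Sum>s<n. w s i * cnj (w s l))"
  using psdf_decomp_aux[of n n p] by auto

lemma trace_prod_nonneg:
  assumes p: "psdf n p" and r: "psdf n r"
  shows "(\<Sum>i<n. \<Sum>l<n. p i l * r l i) \<ge> 0"
proof -
  obtain w where w: "\<forall>i<n. \<forall>l<n. p i l = (\<Sum>s<n. w s i * cnj (w s l))" using psdf_decomp[OF p] by blast
  have "(\<Sum>i<n. \<Sum>l<n. p i l * r l i) = (\<Sum>i<n. \<Sum>l<n. \<Sum>s<n. cnj (w s l) * r l i * w s i)"
    using w by (simp add: sum_distrib_right sum_distrib_left ac_simps)
  also have "\<dots> = (\<Sum>i<n. \<Sum>s<n. \<Sum>l<n. cnj (w s l) * r l i * w s i)"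
    by (rule sum.cong[OF refl], rule sum.swap)
  also have "\<dots> = (\<Sum>s<n. \<Sum>i<n. \<Sum>l<n. cnj (w s l) * r l i * w s i)"
    by (rule sum.swap)
  also have "\<dots> = (\<Sum>s<n. \<Sum>l<n. \<Sum>i<n. cnj (w s l) * r l i * w s i)"
    by (rule sum.cong[OF refl], rule sum.swap)
  also have "\<dots> = (\<Sum>s<n. hf n r (w s))"
    unfolding hf_def by simp
  also have "\<dots> \<ge> 0" using r unfolding psdf_def by (simp add: sum_nonneg)
  finally show ?thesis .
qed

lemma hf_split: "hf (a*b) p v = (\<Sum>x<a. \<Sum>y<b. \<Sum>x'<a. \<Sum>y'<b.
    cnj (v (x*b+y)) * p (x*b+y) (x'*b+y') * v (x'*b+y'))"
  unfolding hf_def by (simp add: sum_split_prod)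

lemma idx_lt: "x < m \<Longrightarrow> y < k \<Longrightarrow> x*k+y < m*(k::nat)"
proof -
  assume "x < m" "y < k"
  then have "x*k + y < x*k + k" by simp
  also have "\<dots> = Suc x * k" by simp
  also have "\<dots> \<le> m * k" using \<open>x < m\<close> by (simp only: mult_le_mono1 Suc_leI)
  finally show ?thesis .
qed

lemma mtrace_mult: assumes "A \<in> carrier_mat n n" "B \<in> carrier_mat n n"
  shows "mtrace (A*B) = (\<Sum>i<n. \<Sum>l<n. A$$(i,l) * B$$(l,i))"
  using assms unfolding mtrace_def
  by (auto simp: scalar_prod_def lessThan_atLeast0 intro!: sum.cong)

lemma lift_meas_entry:
  assumes X: "X x \<in> carrier_mat n n" and x: "x < m" "y < m" and b: "\<beta> < k" "\<beta>' < k"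
  shows "liftA (meas m X) n m k M $$ (x*k+\<beta>, y*k+\<beta>') =
    (if x = y then \<Sum>a<n. \<Sum>a'<n. X x $$ (a,a') * M $$ (a'*k+\<beta>, a*k+\<beta>') else 0)"
proof -
  have k: "k > 0" using b by simp
  have d: "(x*k+\<beta>) div k = x" "(x*k+\<beta>) mod k = \<beta>" "(y*k+\<beta>') div k = y" "(y*k+\<beta>') mod k = \<beta>'"
    using k b by auto
  have bm: "\<beta> mod k = \<beta>" "\<beta>' mod k = \<beta>'" using b by auto
  have e: "liftA (meas m X) n m k M $$ (x*k+\<beta>, y*k+\<beta>') =
      meas m X (mat n n (\<lambda>(a,a'). M $$ (a*k+\<beta>, a'*k+\<beta>'))) $$ (x,y)"
    unfolding liftA_def using idx_lt[OF x(1) b(1)] idx_lt[OF x(2) b(2)] by (simp add: d bm)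
  show ?thesis unfolding e meas_def using x X by (auto simp: mtrace_mult)
qed

lemma psdf_compress:
  assumes "psdf (n*k) p"
  shows "psdf n (\<lambda>a' a. \<Sum>\<beta><k. \<Sum>\<beta>'<k. cnj (u \<beta>) * p (a'*k+\<beta>) (a*k+\<beta>') * u \<beta>')"
  unfolding psdf_def
proof
  fix z
  define w where "w = (\<lambda>i. z (i div k) * u (i mod k))"
  have "hf n (\<lambda>a' a. \<Sum>\<beta><k. \<Sum>\<beta>'<k. cnj (u \<beta>) * p (a'*k+\<beta>) (a*k+\<beta>') * u \<beta>') z
     = (\<Sum>a'<n. \<Sum>a<n. \<Sum>\<beta><k. \<Sum>\<beta>'<k. cnj (w (a'*k+\<beta>)) * p (a'*k+\<beta>) (a*k+\<beta>') * w (a*k+\<beta>'))"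
    unfolding hf_def w_def
    by (auto simp: sum_distrib_left sum_distrib_right ac_simps intro!: sum.cong)
  also have "\<dots> = (\<Sum>a'<n. \<Sum>\<beta><k. \<Sum>a<n. \<Sum>\<beta>'<k. cnj (w (a'*k+\<beta>)) * p (a'*k+\<beta>) (a*k+\<beta>') * w (a*k+\<beta>'))"
    by (rule sum.cong[OF refl], rule sum.swap)
  also have "\<dots> = hf (n*k) p w" by (simp add: hf_split)
  also have "\<dots> \<ge> 0" using assms unfolding psdf_def by blast
  finally show "hf n (\<lambda>a' a. \<Sum>\<beta><k. \<Sum>\<beta>'<k. cnj (u \<beta>) * p (a'*k+\<beta>) (a*k+\<beta>') * u \<beta>') z \<ge> 0" .
qed

lemma sum_swap4:
  fixes f :: "'a \<Rightarrow> 'b \<Rightarrow> 'c \<Rightarrow> 'd \<Rightarrow> 'e::comm_monoid_add"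
  shows "(\<Sum>i\<in>I. \<Sum>j\<in>J. \<Sum>k\<in>K. \<Sum>l\<in>L. f i j k l) = (\<Sum>k\<in>K. \<Sum>l\<in>L. \<Sum>i\<in>I. \<Sum>j\<in>J. f i j k l)"
proof -
  have "(\<Sum>i\<in>I. \<Sum>j\<in>J. \<Sum>k\<in>K. \<Sum>l\<in>L. f i j k l) = (\<Sum>i\<in>I. \<Sum>k\<in>K. \<Sum>j\<in>J. \<Sum>l\<in>L. f i j k l)"
    by (rule sum.cong[OF refl], rule sum.swap)
  also have "\<dots> = (\<Sum>i\<in>I. \<Sum>k\<in>K. \<Sum>l\<in>L. \<Sum>j\<in>J. f i j k l)"
    by (rule sum.cong[OF refl], rule sum.cong[OF refl], rule sum.swap)
  also have "\<dots> = (\<Sum>k\<in>K. \<Sum>i\<in>I. \<Sum>l\<in>L. \<Sum>j\<in>J. f i j k l)"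
    by (rule sum.swap)
  also have "\<dots> = (\<Sum>k\<in>K. \<Sum>l\<in>L. \<Sum>i\<in>I. \<Sum>j\<in>J. f i j k l)"
    by (rule sum.cong[OF refl], rule sum.swap)
  finally show ?thesis .
qed

lemma lift_meas_psd:
  assumes X: "\<forall>x<m. psd n (X x)" and M: "psd (n*k) M"
  shows "psd (m*k) (liftA (meas m X) n m k M)"
  unfolding psd_iff
proof
  show "liftA (meas m X) n m k M \<in> carrier_mat (m*k) (m*k)" unfolding liftA_def by simp
  show "psdf (m*k) (\<lambda>i l. liftA (meas m X) n m k M $$ (i,l))" unfolding psdf_def
  proof
    fix v
    have Xc: "\<And>x. x < m \<Longrightarrow> X x \<in> carrier_mat n n" using X unfolding psd_def by auto
    have Xp: "\<And>x. x < m \<Longrightarrow> psdf n (\<lambda>i l. X x $$ (i,l))" using X unfolding psd_iff by auto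
    have Mp: "psdf (n*k) (\<lambda>i l. M $$ (i,l))" using M unfolding psd_iff by auto
    define R where "R = (\<lambda>x a' a. \<Sum>\<beta><k. \<Sum>\<beta>'<k. cnj (v (x*k+\<beta>)) * M $$ (a'*k+\<beta>, a*k+\<beta>') * v (x*k+\<beta>'))"
    have "hf (m*k) (\<lambda>i l. liftA (meas m X) n m k M $$ (i,l)) v
      = (\<Sum>x<m. \<Sum>\<beta><k. \<Sum>y<m. \<Sum>\<beta>'<k.
          cnj (v (x*k+\<beta>)) * liftA (meas m X) n m k M $$ (x*k+\<beta>, y*k+\<beta>') * v (y*k+\<beta>'))"
      by (simp add: hf_split)
    also have "\<dots> = (\<Sum>x<m. \<Sum>\<beta><k. \<Sum>\<beta>'<k.
          cnj (v (x*k+\<beta>)) * (\<Sum>a<n. \<Sum>a'<n. X x $$ (a,a') * M $$ (a'*k+\<beta>, a*k+\<beta>')) * v (x*k+\<beta>'))"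
    proof (rule sum.cong[OF refl], rule sum.cong[OF refl])
      fix x \<beta> assume x: "x \<in> {..<m}" and b: "\<beta> \<in> {..<k}"
      have "(\<Sum>y<m. \<Sum>\<beta>'<k. cnj (v (x*k+\<beta>)) * liftA (meas m X) n m k M $$ (x*k+\<beta>, y*k+\<beta>') * v (y*k+\<beta>'))
        = (\<Sum>y<m. if x = y then (\<Sum>\<beta>'<k. cnj (v (x*k+\<beta>)) * (\<Sum>a<n. \<Sum>a'<n. X x $$ (a,a') * M $$ (a'*k+\<beta>, a*k+\<beta>')) * v (x*k+\<beta>')) else 0)"
      proof (rule sum.cong[OF refl])
        fix y assume y: "y \<in> {..<m}"
        show "(\<Sum>\<beta>'<k. cnj (v (x*k+\<beta>)) * liftA (meas m X) n m k M $$ (x*k+\<beta>, y*k+\<beta>') * v (y*k+\<beta>'))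
          = (if x = y then (\<Sum>\<beta>'<k. cnj (v (x*k+\<beta>)) * (\<Sum>a<n. \<Sum>a'<n. X x $$ (a,a') * M $$ (a'*k+\<beta>, a*k+\<beta>')) * v (x*k+\<beta>')) else 0)"
          using x b y by (cases "x = y") (simp_all add: lift_meas_entry[OF Xc])
      qed
      also have "\<dots> = (\<Sum>\<beta>'<k. cnj (v (x*k+\<beta>)) * (\<Sum>a<n. \<Sum>a'<n. X x $$ (a,a') * M $$ (a'*k+\<beta>, a*k+\<beta>')) * v (x*k+\<beta>'))"
        using x by (simp add: sum_if_eq')
      finally show "(\<Sum>y<m. \<Sum>\<beta>'<k. cnj (v (x*k+\<beta>)) * liftA (meas m X) n m k M $$ (x*k+\<beta>, y*k+\<beta>') * v (y*k+\<beta>'))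
        = (\<Sum>\<beta>'<k. cnj (v (x*k+\<beta>)) * (\<Sum>a<n. \<Sum>a'<n. X x $$ (a,a') * M $$ (a'*k+\<beta>, a*k+\<beta>')) * v (x*k+\<beta>'))" .
    qed
    also have "\<dots> = (\<Sum>x<m. \<Sum>\<beta><k. \<Sum>\<beta>'<k. \<Sum>a<n. \<Sum>a'<n.
          X x $$ (a,a') * (cnj (v (x*k+\<beta>)) * M $$ (a'*k+\<beta>, a*k+\<beta>') * v (x*k+\<beta>')))"
      by (simp add: sum_distrib_left sum_distrib_right ac_simps)
    also have "\<dots> = (\<Sum>x<m. \<Sum>a<n. \<Sum>a'<n. \<Sum>\<beta><k. \<Sum>\<beta>'<k.
          X x $$ (a,a') * (cnj (v (x*k+\<beta>)) * M $$ (a'*k+\<beta>, a*k+\<beta>') * v (x*k+\<beta>')))"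
      by (rule sum.cong[OF refl], rule sum_swap4)
    also have "\<dots> = (\<Sum>x<m. \<Sum>a<n. \<Sum>a'<n. X x $$ (a,a') * R x a' a)"
      unfolding R_def by (simp add: sum_distrib_left)
    also have "\<dots> \<ge> 0"
    proof (rule sum_nonneg)
      fix x assume x: "x \<in> {..<m}"
      have "psdf n (R x)" unfolding R_def
        using psdf_compress[OF Mp, of "\<lambda>\<beta>. v (x*k+\<beta>)"] by simp
      then show "(\<Sum>a<n. \<Sum>a'<n. X x $$ (a,a') * R x a' a) \<ge> 0"
        using trace_prod_nonneg[OF Xp] x by simp
    qed
    finally show "hf (m*k) (\<lambda>i l. liftA (meas m X) n m k M $$ (i,l)) v \<ge> 0" .
  qed
qed

lemma sum_split_add:
  fixes f :: "nat \<Rightarrow> 'a::comm_monoid_add"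
  shows "(\<Sum>i<a+b. f i) = (\<Sum>i<a. f i) + (\<Sum>i<b. f (a+i))"
proof -
  have "(\<Sum>i<a+b. f i) = (\<Sum>i<a. f i) + (\<Sum>i\<in>{a..<a+b}. f i)"
    by (simp add: lessThan_atLeast0 sum.atLeastLessThan_concat)
  also have "(\<Sum>i\<in>{a..<a+b}. f i) = (\<Sum>i<b. f (a+i))"
    using sum.shift_bounds_nat_ivl[of f 0 a b] by (simp add: lessThan_atLeast0 add.commute)
  finally show ?thesis .
qed

lemma meas_cptp:
  assumes P: "povm n m X"
  shows "cptp n m (meas m X)"
proof -
  have Xc: "\<And>x. x < m \<Longrightarrow> X x \<in> carrier_mat n n" using P unfolding povm_def psd_def by auto
  have S: "\<And>i i'. i < n \<Longrightarrow> i' < n \<Longrightarrow> (\<Sum>j<m. X j $$ (i,i')) = (if i = i' then 1 else 0)"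
    using P unfolding povm_def by auto
  show ?thesis unfolding cptp_def
  proof (intro conjI ballI allI impI)
    fix A :: "complex mat" assume A: "A \<in> carrier_mat n n"
    show "meas m X A \<in> carrier_mat m m" unfolding meas_def by simp
    fix c :: complex
    show "meas m X (c \<cdot>\<^sub>m A) = c \<cdot>\<^sub>m meas m X A"
    proof -
      have cA: "c \<cdot>\<^sub>m A \<in> carrier_mat n n" using A by simp
      have t: "\<And>j. j < m \<Longrightarrow> mtrace (X j * (c \<cdot>\<^sub>m A)) = c * mtrace (X j * A)"
        using A by (simp add: mtrace_mult[OF Xc cA] mtrace_mult[OF Xc A] sum_distrib_left ac_simps)
      show ?thesis
        by (rule eq_matI) (use A Xc cA in \<open>auto simp: meas_def t\<close>)
    qed
  next
    fix A B :: "complex mat" assume A: "A \<in> carrier_mat n n" and B: "B \<in> carrier_mat n n"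
    show "meas m X (A + B) = meas m X A + meas m X B"
    proof -
      have cA: "A + B \<in> carrier_mat n n" using A B by simp
      have t: "\<And>j. j < m \<Longrightarrow> mtrace (X j * (A + B)) = mtrace (X j * A) + mtrace (X j * B)"
        using A B by (simp add: mtrace_mult[OF Xc cA] mtrace_mult[OF Xc A] mtrace_mult[OF Xc B] distrib_left sum.distrib)
      show ?thesis
        by (rule eq_matI) (use A B Xc cA in \<open>auto simp: meas_def t\<close>)
    qed
  next
    fix A :: "complex mat" assume A: "A \<in> carrier_mat n n"
    have "mtrace (meas m X A) = (\<Sum>j<m. \<Sum>i<n. \<Sum>l<n. X j $$ (i,l) * A $$ (l,i))"
    proof -
      have "mtrace (meas m X A) = (\<Sum>j<m. mtrace (X j * A))" unfolding mtrace_def meas_def by simp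
      also have "\<dots> = (\<Sum>j<m. \<Sum>i<n. \<Sum>l<n. X j $$ (i,l) * A $$ (l,i))"
        by (rule sum.cong[OF refl]) (simp add: mtrace_mult[OF Xc A])
      finally show ?thesis .
    qed
    also have "\<dots> = (\<Sum>i<n. \<Sum>l<n. (\<Sum>j<m. X j $$ (i,l)) * A $$ (l,i))"
      by (simp add: sum_distrib_right sum.swap[of _ "{..<m}"])
    also have "\<dots> = (\<Sum>i<n. \<Sum>l<n. (if i = l then A $$ (l,i) else 0))"
      by (intro sum.cong refl) (simp add: S)
    also have "\<dots> = mtrace A" unfolding mtrace_def using A by (simp add: sum_if_eq')
    finally show "mtrace (meas m X A) = mtrace A" .
  next
    fix k M assume "psd (n*k) M"
    then show "psd (m*k) (liftA (meas m X) n m k M)"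
      using lift_meas_psd P unfolding povm_def by blast
  qed
qed

lemma psd_block:
  assumes A: "psd n A" and B: "psd n' B"
  shows "psd (n+n') (four_block_mat A (0\<^sub>m n n') (0\<^sub>m n' n) B)"
  unfolding psd_iff
proof
  have Ac: "A \<in> carrier_mat n n" and Bc: "B \<in> carrier_mat n' n'" using A B unfolding psd_def by auto
  then show "four_block_mat A (0\<^sub>m n n') (0\<^sub>m n' n) B \<in> carrier_mat (n+n') (n+n')" by simp
  show "psdf (n+n') (\<lambda>i l. four_block_mat A (0\<^sub>m n n') (0\<^sub>m n' n) B $$ (i,l))"
    unfolding psdf_def
  proof
    fix v
    have "hf (n+n') (\<lambda>i l. four_block_mat A (0\<^sub>m n n') (0\<^sub>m n' n) B $$ (i,l)) v
       = hf n (\<lambda>i l. A $$ (i,l)) v + hf n' (\<lambda>i l. B $$ (i,l)) (\<lambda>i. v (n+i))"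
      unfolding hf_def using Ac Bc by (simp add: sum_split_add sum.distrib)
    also have "\<dots> \<ge> 0" using A B unfolding psd_iff psdf_def by (simp add: add_nonneg_nonneg)
    finally show "hf (n+n') (\<lambda>i l. four_block_mat A (0\<^sub>m n n') (0\<^sub>m n' n) B $$ (i,l)) v \<ge> 0" .
  qed
qed

definition badd :: "nat \<Rightarrow> complex mat \<Rightarrow> complex mat" where
  "badd n M = mat n n (\<lambda>(i,j). M $$ (i,j) + M $$ (i+n, j+n))"

lemma lift_badd_entry:
  assumes "i < n*k" "j < n*k"
  shows "liftA (badd n) (n+n) n k M $$ (i,j) = M $$ (i,j) + M $$ (n*k+i, n*k+j)"
proof -
  have k: "k > 0" using assms by (cases k) auto
  have d: "i div k < n" "j div k < n" using assms k by (auto simp: div_less_iff_less_mult)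
  have e1: "(i div k + n) * k + i mod k = n*k+i" "(j div k + n) * k + j mod k = n*k+j"
    by (simp_all add: algebra_simps)
  have e2: "(i div k) * k + i mod k = i" "(j div k) * k + j mod k = j" by simp_all
  show ?thesis unfolding liftA_def badd_def using assms d
    by (simp add: e1 e2 add_less_mono)
qed

lemma hf_v0: "hf (a+a) p (\<lambda>i. if i < a then v i else 0) = (\<Sum>i<a. \<Sum>j<a. cnj (v i) * p i j * v j)"
  unfolding hf_def by (simp add: sum_split_add)

lemma hf_v1: "hf (a+a) p (\<lambda>i. if i < a then 0 else v (i - a)) = (\<Sum>i<a. \<Sum>j<a. cnj (v i) * p (a+i) (a+j) * v j)"
  unfolding hf_def by (simp add: sum_split_add)

lemma badd_cptp: "cptp (n+n) n (badd n)"
  unfolding cptp_def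
proof (intro conjI ballI allI impI)
  fix A :: "complex mat" assume A: "A \<in> carrier_mat (n+n) (n+n)"
  show "badd n A \<in> carrier_mat n n" unfolding badd_def by simp
  fix c :: complex
  show "badd n (c \<cdot>\<^sub>m A) = c \<cdot>\<^sub>m badd n A"
    by (rule eq_matI) (use A in \<open>auto simp: badd_def algebra_simps\<close>)
next
  fix A B :: "complex mat" assume A: "A \<in> carrier_mat (n+n) (n+n)" and B: "B \<in> carrier_mat (n+n) (n+n)"
  show "badd n (A + B) = badd n A + badd n B"
    by (rule eq_matI) (use A B in \<open>auto simp: badd_def algebra_simps\<close>)
next
  fix A :: "complex mat" assume A: "A \<in> carrier_mat (n+n) (n+n)"
  show "mtrace (badd n A) = mtrace A"
    unfolding mtrace_def badd_def using A by (simp add: sum_split_add sum.distrib add.commute)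
next
  fix k M assume M: "psd ((n+n)*k) M"
  have Mp: "psdf (n*k+n*k) (\<lambda>i l. M $$ (i,l))" using M unfolding psd_iff by (simp add: algebra_simps)
  show "psd (n*k) (liftA (badd n) (n+n) n k M)"
    unfolding psd_iff
  proof
    show "liftA (badd n) (n+n) n k M \<in> carrier_mat (n*k) (n*k)" unfolding liftA_def by simp
    show "psdf (n*k) (\<lambda>i l. liftA (badd n) (n+n) n k M $$ (i,l))" unfolding psdf_def
    proof
      fix v
      have "hf (n*k) (\<lambda>i l. liftA (badd n) (n+n) n k M $$ (i,l)) v
         = hf (n*k+n*k) (\<lambda>i l. M $$ (i,l)) (\<lambda>i. if i < n*k then v i else 0)
         + hf (n*k+n*k) (\<lambda>i l. M $$ (i,l)) (\<lambda>i. if i < n*k then 0 else v (i - n*k))"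
        unfolding hf_v0 hf_v1 unfolding hf_def
        by (simp add: lift_badd_entry distrib_left distrib_right sum.distrib)
      also have "\<dots> \<ge> 0" using Mp unfolding psdf_def by (simp add: add_nonneg_nonneg)
      finally show "hf (n*k) (\<lambda>i l. liftA (badd n) (n+n) n k M $$ (i,l)) v \<ge> 0" .
    qed
  qed
qed

lemma psd_zero: "psd n (0\<^sub>m n n)" unfolding psd_iff psdf_def hf_def by simp

lemma D_mono:
  assumes D: "relK b D" and S: "psd n S" and T: "psd n T" and R: "psd n R"
  shows "D S (T + R) \<le> D S T"
proof -
  have Sc: "S \<in> carrier_mat n n" and Tc: "T \<in> carrier_mat n n" and Rc: "R \<in> carrier_mat n n"
    using S T R unfolding psd_def by auto
  define S' where "S' = four_block_mat S (0\<^sub>m n n) (0\<^sub>m n n) (0\<^sub>m n n)"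
  define T' where "T' = four_block_mat T (0\<^sub>m n n) (0\<^sub>m n n) R"
  have S': "psd (n+n) S'" unfolding S'_def by (rule psd_block[OF S psd_zero])
  have T': "psd (n+n) T'" unfolding T'_def by (rule psd_block[OF T R])
  have e1: "badd n S' = S" by (rule eq_matI) (use Sc in \<open>auto simp: badd_def S'_def\<close>)
  have e2: "badd n T' = T + R" by (rule eq_matI) (use Tc Rc in \<open>auto simp: badd_def T'_def\<close>)
  have "D (badd n S') (badd n T') \<le> D S' T'"
    using D badd_cptp S' T' unfolding relK_def by blast
  also have "D S' T' = D S T" using D S T R unfolding relK_def S'_def T'_def by blast
  finally show ?thesis using e1 e2 by simp
qed

lemma lift_meas_entry_gen:
  assumes X: "\<And>x. x < m \<Longrightarrow> X x \<in> carrier_mat n n" and ij: "i < m*k" "j < m*k"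
  shows "liftA (meas m X) n m k M $$ (i,j) =
    (if i div k = j div k then \<Sum>a<n. \<Sum>a'<n. X (i div k) $$ (a,a') * M $$ (a'*k + i mod k, a*k + j mod k) else 0)"
proof -
  have k: "k > 0" using ij by (cases k) auto
  have x: "i div k < m" "j div k < m" using ij k by (auto simp: div_less_iff_less_mult)
  have b: "i mod k < k" "j mod k < k" using k by auto
  show ?thesis using lift_meas_entry[of X "i div k" n m "j div k" "i mod k" k "j mod k" M] X[OF x(1)] x b by simp
qed

lemma mtrace_ptrA: assumes "M \<in> carrier_mat (n*k) (n*k)"
  shows "mtrace (ptrA n k M) = mtrace M"
proof -
  have "mtrace M = (\<Sum>i<n*k. M $$ (i,i))" unfolding mtrace_def using assms by simp
  also have "\<dots> = (\<Sum>a<n. \<Sum>i<k. M $$ (a*k+i, a*k+i))" by (rule sum_split_prod)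
  also have "\<dots> = (\<Sum>i<k. \<Sum>a<n. M $$ (a*k+i, a*k+i))" by (rule sum.swap)
  also have "\<dots> = mtrace (ptrA n k M)" unfolding mtrace_def ptrA_def by simp
  finally show ?thesis by simp
qed

lemma hf_add: "hf n (\<lambda>i l. p i l + q i l) v = hf n p v + hf n q v"
  unfolding hf_def by (simp add: algebra_simps sum.distrib)

lemma psd_add: assumes "psd n A" "psd n B" shows "psd n (A + B)"
proof -
  have c: "A \<in> carrier_mat n n" "B \<in> carrier_mat n n" using assms unfolding psd_def by auto
  have "hf n (\<lambda>i l. (A + B) $$ (i,l)) v = hf n (\<lambda>i l. A $$ (i,l)) v + hf n (\<lambda>i l. B $$ (i,l)) v" for v
    unfolding hf_def using c by (simp add: algebra_simps sum.distrib)
  then show ?thesis using assms c unfolding psd_iff psdf_def by (simp add: add_nonneg_nonneg)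
qed

lemma cnj_mult_self_nonneg: "cnj z * z \<ge> (0::complex)"
  using conjugate_square_positive[of z] by (simp add: mult.commute)

lemma psd_one: "psd n (1\<^sub>m n)"
  unfolding psd_iff psdf_def hf_def
  by (auto intro!: sum_nonneg simp: if_distrib[of "\<lambda>x. _ * x * _"] sum.delta cnj_mult_self_nonneg cong: if_cong)

lemma povm_carrier: "povm n m X \<Longrightarrow> x < m \<Longrightarrow> X x \<in> carrier_mat n n"
  unfolding povm_def psd_def by auto

lemma povm_sum: "povm n m X \<Longrightarrow> i < n \<Longrightarrow> i' < n \<Longrightarrow> (\<Sum>j<m. X j $$ (i,i')) = (if i = i' then 1 else 0)"
  unfolding povm_def by auto

lemma ptrA_lift:
  assumes P: "povm dA m X" and R: "\<rho> \<in> carrier_mat (dA*dB) (dA*dB)"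
  shows "ptrA m dB (liftA (meas m X) dA m dB \<rho>) = ptrA dA dB \<rho>"
proof (rule eq_matI)
  fix i j assume i: "i < dim_row (ptrA dA dB \<rho>)" and j: "j < dim_col (ptrA dA dB \<rho>)"
  then have i: "i < dB" and j: "j < dB" unfolding ptrA_def by auto
  have "ptrA m dB (liftA (meas m X) dA m dB \<rho>) $$ (i,j) = (\<Sum>x<m. liftA (meas m X) dA m dB \<rho> $$ (x*dB+i, x*dB+j))"
    unfolding ptrA_def using i j by simp
  also have "\<dots> = (\<Sum>x<m. \<Sum>a<dA. \<Sum>a'<dA. X x $$ (a,a') * \<rho> $$ (a'*dB+i, a*dB+j))"
    by (rule sum.cong[OF refl]) (simp add: lift_meas_entry[OF povm_carrier[OF P]] i j)
  also have "\<dots> = (\<Sum>a<dA. \<Sum>a'<dA. (\<Sum>x<m. X x $$ (a,a')) * \<rho> $$ (a'*dB+i, a*dB+j))"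
    by (simp add: sum_distrib_right sum.swap[of _ "{..<m}"])
  also have "\<dots> = (\<Sum>a<dA. \<Sum>a'<dA. (if a = a' then \<rho> $$ (a'*dB+i, a*dB+j) else 0))"
    by (intro sum.cong refl) (simp add: povm_sum[OF P])
  also have "\<dots> = ptrA dA dB \<rho> $$ (i,j)" unfolding ptrA_def using i j by (simp add: sum_if_eq')
  finally show "ptrA m dB (liftA (meas m X) dA m dB \<rho>) $$ (i,j) = ptrA dA dB \<rho> $$ (i,j)" .
qed (auto simp: ptrA_def)

lemma ptrA_as_lift:
  assumes R: "\<rho> \<in> carrier_mat (dA*dB) (dA*dB)"
  shows "ptrA dA dB \<rho> = liftA (meas 1 (\<lambda>_. 1\<^sub>m dA)) dA 1 dB \<rho>"
proof (rule eq_matI)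
  fix i j assume i: "i < dim_row (liftA (meas 1 (\<lambda>_. 1\<^sub>m dA)) dA 1 dB \<rho>)"
    and j: "j < dim_col (liftA (meas 1 (\<lambda>_. 1\<^sub>m dA)) dA 1 dB \<rho>)"
  then have i: "i < dB" and j: "j < dB" unfolding liftA_def by auto
  have "liftA (meas 1 (\<lambda>_. 1\<^sub>m dA)) dA 1 dB \<rho> $$ (0*dB+i, 0*dB+j) =
     (\<Sum>a<dA. \<Sum>a'<dA. 1\<^sub>m dA $$ (a,a') * \<rho> $$ (a'*dB+i, a*dB+j))"
    by (subst lift_meas_entry) (use i j in auto)
  also have "\<dots> = (\<Sum>a<dA. \<Sum>a'<dA. (if a = a' then \<rho> $$ (a'*dB+i, a*dB+j) else 0))"
    by (intro sum.cong refl) simp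
  also have "\<dots> = ptrA dA dB \<rho> $$ (i,j)" unfolding ptrA_def using i j by (simp add: sum_if_eq')
  finally show "ptrA dA dB \<rho> $$ (i,j) = liftA (meas 1 (\<lambda>_. 1\<^sub>m dA)) dA 1 dB \<rho> $$ (i,j)" by simp
qed (auto simp: ptrA_def liftA_def)

lemma hf_sum: "finite Y \<Longrightarrow> hf n (\<lambda>i l. \<Sum>y\<in>Y. p y i l) v = (\<Sum>y\<in>Y. hf n (p y) v)"
  by (induction Y rule: finite_induct) (simp_all add: hf_def hf_add[unfolded hf_def] sum.distrib algebra_simps)

lemma one_minus_psd:
  assumes P: "povm dA m X" and x: "x < m"
  shows "psd dA (1\<^sub>m dA - X x)"
  unfolding psd_iff
proof
  have Xc: "X x \<in> carrier_mat dA dA" by (rule povm_carrier[OF P x])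
  then show "1\<^sub>m dA - X x \<in> carrier_mat dA dA" by (rule minus_carrier_mat)
  have e: "\<forall>i<dA. \<forall>l<dA. (1\<^sub>m dA - X x) $$ (i,l) = (\<Sum>y\<in>{..<m} - {x}. X y $$ (i,l))"
  proof (intro allI impI)
    fix i l assume "i < dA" "l < dA"
    then show "(1\<^sub>m dA - X x) $$ (i,l) = (\<Sum>y\<in>{..<m} - {x}. X y $$ (i,l))"
      using Xc povm_sum[OF P] x by (simp add: sum_diff1)
  qed
  show "psdf dA (\<lambda>i l. (1\<^sub>m dA - X x) $$ (i,l))" unfolding psdf_def
  proof
    fix v
    have "hf dA (\<lambda>i l. (1\<^sub>m dA - X x) $$ (i,l)) v = hf dA (\<lambda>i l. \<Sum>y\<in>{..<m} - {x}. X y $$ (i,l)) v"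
      unfolding hf_def using e by simp
    also have "\<dots> = (\<Sum>y\<in>{..<m} - {x}. hf dA (\<lambda>i l. X y $$ (i,l)) v)" by (rule hf_sum) simp
    also have "\<dots> \<ge> 0"
      using P unfolding povm_def psd_iff psdf_def by (auto intro!: sum_nonneg)
    finally show "hf dA (\<lambda>i l. (1\<^sub>m dA - X x) $$ (i,l)) v \<ge> 0" .
  qed
qed

lemma dim_liftA[simp]: "dim_row (liftA Phi n m k M) = m*k" "dim_col (liftA Phi n m k M) = m*k"
  unfolding liftA_def by simp_all

lemma kron_decomp:
  assumes P: "povm dA m X" and R: "\<rho> \<in> carrier_mat (dA*dB) (dA*dB)"
  shows "kron (1\<^sub>m m) (ptrA dA dB \<rho>) = liftA (meas m X) dA m dB \<rho> + liftA (meas m (\<lambda>x. 1\<^sub>m dA - X x)) dA m dB \<rho>"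
proof (rule eq_matI)
  have Xc: "\<And>x. x < m \<Longrightarrow> X x \<in> carrier_mat dA dA" by (rule povm_carrier[OF P])
  have Yc: "\<And>x. x < m \<Longrightarrow> 1\<^sub>m dA - X x \<in> carrier_mat dA dA" using Xc by (metis minus_carrier_mat)
  fix i j assume i: "i < dim_row (liftA (meas m X) dA m dB \<rho> + liftA (meas m (\<lambda>x. 1\<^sub>m dA - X x)) dA m dB \<rho>)"
    and j: "j < dim_col (liftA (meas m X) dA m dB \<rho> + liftA (meas m (\<lambda>x. 1\<^sub>m dA - X x)) dA m dB \<rho>)"
  then have i: "i < m*dB" and j: "j < m*dB" unfolding liftA_def by auto
  have k: "dB > 0" using i by (cases dB) auto
  have x: "i div dB < m" "j div dB < m" using i j k by (auto simp: div_less_iff_less_mult)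
  define r where "r = (\<lambda>a' a. \<rho> $$ (a'*dB + i mod dB, a*dB + j mod dB))"
  have L: "kron (1\<^sub>m m) (ptrA dA dB \<rho>) $$ (i,j) = (if i div dB = j div dB then (\<Sum>a<dA. r a a) else 0)"
    unfolding kron_def r_def using i j x k by (simp add: ptrA_def)
  have "(\<Sum>a<dA. \<Sum>a'<dA. X (i div dB) $$ (a,a') * r a' a) + (\<Sum>a<dA. \<Sum>a'<dA. (1\<^sub>m dA - X (i div dB)) $$ (a,a') * r a' a)
      = (\<Sum>a<dA. \<Sum>a'<dA. (if a = a' then r a' a else 0))"
    unfolding sum.distrib[symmetric]
    by (intro sum.cong refl) (use Xc[OF x(1)] in \<open>auto simp: algebra_simps\<close>)
  also have "\<dots> = (\<Sum>a<dA. r a a)" by (simp add: sum_if_eq')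
  finally have S: "(\<Sum>a<dA. \<Sum>a'<dA. X (i div dB) $$ (a,a') * r a' a) + (\<Sum>a<dA. \<Sum>a'<dA. (1\<^sub>m dA - X (i div dB)) $$ (a,a') * r a' a)
      = (\<Sum>a<dA. r a a)" .
  show "kron (1\<^sub>m m) (ptrA dA dB \<rho>) $$ (i,j) = (liftA (meas m X) dA m dB \<rho> + liftA (meas m (\<lambda>x. 1\<^sub>m dA - X x)) dA m dB \<rho>) $$ (i,j)"
    unfolding L using i j S
    by (simp add: lift_meas_entry_gen[OF Xc] lift_meas_entry_gen[of m "\<lambda>x. 1\<^sub>m dA - X x", OF Yc] r_def) (metis S)
qed (auto simp: kron_def liftA_def ptrA_def)

lemma psd_kron_one:
  assumes S: "psd k \<sigma>"
  shows "psd (m*k) (kron (1\<^sub>m m) \<sigma>)"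
  unfolding psd_iff
proof
  have Sc: "\<sigma> \<in> carrier_mat k k" using S unfolding psd_def by auto
  then show "kron (1\<^sub>m m) \<sigma> \<in> carrier_mat (m*k) (m*k)" unfolding kron_def by auto
  show "psdf (m*k) (\<lambda>i l. kron (1\<^sub>m m) \<sigma> $$ (i,l))" unfolding psdf_def
  proof
    fix v
    have e: "kron (1\<^sub>m m) \<sigma> $$ (x*k+\<beta>, y*k+\<beta>') = (if x = y then \<sigma> $$ (\<beta>,\<beta>') else 0)"
      if "x < m" "y < m" "\<beta> < k" "\<beta>' < k" for x y \<beta> \<beta>'
      unfolding kron_def using that Sc idx_lt[of x m \<beta> k] idx_lt[of y m \<beta>' k] by auto
    have "hf (m*k) (\<lambda>i l. kron (1\<^sub>m m) \<sigma> $$ (i,l)) v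
      = (\<Sum>x<m. \<Sum>\<beta><k. \<Sum>y<m. \<Sum>\<beta>'<k. cnj (v (x*k+\<beta>)) * kron (1\<^sub>m m) \<sigma> $$ (x*k+\<beta>, y*k+\<beta>') * v (y*k+\<beta>'))"
      by (simp add: hf_split)
    also have "\<dots> = (\<Sum>x<m. \<Sum>\<beta><k. \<Sum>y<m. if x = y then (\<Sum>\<beta>'<k. cnj (v (x*k+\<beta>)) * \<sigma> $$ (\<beta>,\<beta>') * v (x*k+\<beta>')) else 0)"
      by (intro sum.cong refl) (auto simp: e)
    also have "\<dots> = (\<Sum>x<m. hf k (\<lambda>i l. \<sigma> $$ (i,l)) (\<lambda>\<beta>. v (x*k+\<beta>)))"
      unfolding hf_def by (simp add: sum_if_eq')
    also have "\<dots> \<ge> 0" using S unfolding psd_iff psdf_def by (simp add: sum_nonneg)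
    finally show "hf (m*k) (\<lambda>i l. kron (1\<^sub>m m) \<sigma> $$ (i,l)) v \<ge> 0" .
  qed
qed

lemma part1:
  assumes D: "relK b D" and P: "povm dA m X" and R: "density (dA*dB) \<rho>"
  shows "density (m*dB) (liftA (meas m X) dA m dB \<rho>)"
    and "density dB (ptrA dA dB \<rho>)"
    and "ptrA m dB (liftA (meas m X) dA m dB \<rho>) = ptrA dA dB \<rho>"
    and "D (liftA (meas m X) dA m dB \<rho>) (kron (1\<^sub>m m) (ptrA dA dB \<rho>)) \<le> 0"
proof -
  have Rp: "psd (dA*dB) \<rho>" and Rt: "mtrace \<rho> = 1" using R unfolding density_def by auto
  have Rc: "\<rho> \<in> carrier_mat (dA*dB) (dA*dB)" using Rp unfolding psd_def by auto
  let ?L = "liftA (meas m X) dA m dB \<rho>"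
  have Xp: "\<forall>x<m. psd dA (X x)" using P unfolding povm_def by auto
  have Lp: "psd (m*dB) ?L" by (rule lift_meas_psd[OF Xp Rp])
  have Bp: "psd dB (ptrA dA dB \<rho>)"
    using lift_meas_psd[of 1 dA "\<lambda>_. 1\<^sub>m dA" dB \<rho>] psd_one Rp ptrA_as_lift[OF Rc] by simp
  have Bt: "mtrace (ptrA dA dB \<rho>) = 1" using mtrace_ptrA[OF Rc] Rt by simp
  show B: "density dB (ptrA dA dB \<rho>)" unfolding density_def using Bp Bt by simp
  show E: "ptrA m dB ?L = ptrA dA dB \<rho>" by (rule ptrA_lift[OF P Rc])
  have Lc: "?L \<in> carrier_mat (m*dB) (m*dB)" unfolding liftA_def by simp
  have "mtrace ?L = 1" using mtrace_ptrA[OF Lc] E Bt by simp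
  then show L: "density (m*dB) ?L" unfolding density_def using Lp by simp
  have Yp: "\<forall>x<m. psd dA (1\<^sub>m dA - X x)" using one_minus_psd[OF P] by auto
  have Dp: "psd (m*dB) (liftA (meas m (\<lambda>x. 1\<^sub>m dA - X x)) dA m dB \<rho>)" by (rule lift_meas_psd[OF Yp Rp])
  have "D ?L (kron (1\<^sub>m m) (ptrA dA dB \<rho>)) = D ?L (?L + liftA (meas m (\<lambda>x. 1\<^sub>m dA - X x)) dA m dB \<rho>)"
    by (simp add: kron_decomp[OF P Rc])
  also have "\<dots> \<le> D ?L ?L" by (rule D_mono[OF D Lp Lp Dp])
  also have "D ?L ?L = 0" using D L unfolding relK_def by blast
  finally show "D ?L (kron (1\<^sub>m m) (ptrA dA dB \<rho>)) \<le> 0" .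
qed

definition ip :: "nat \<Rightarrow> (nat \<Rightarrow> complex) \<Rightarrow> (nat \<Rightarrow> complex) \<Rightarrow> complex" where
  "ip n u v = (\<Sum>i<n. u i * cnj (v i))"

lemma ip_cnj: "cnj (ip n u v) = ip n v u" unfolding ip_def by (simp add: ac_simps)

lemma ip_diff: "ip n (\<lambda>i. a i - b i) v = ip n a v - ip n b v"
  unfolding ip_def by (simp add: algebra_simps sum_subtractf)

lemma ip_add: "ip n (\<lambda>i. a i + b i) v = ip n a v + ip n b v"
  unfolding ip_def by (simp add: algebra_simps sum.distrib)

lemma ip_scale: "ip n (\<lambda>i. c * a i) v = c * ip n a v"
  unfolding ip_def by (simp add: algebra_simps sum_distrib_left)

lemma ip_sum: "ip n (\<lambda>i. \<Sum>s\<in>S. f s i) v = (\<Sum>s\<in>S. ip n (f s) v)"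
  unfolding ip_def by (simp add: sum_distrib_right) (rule sum.swap)

lemma ip_cong: "(\<And>i. i < n \<Longrightarrow> a i = b i) \<Longrightarrow> ip n a v = ip n b v"
  unfolding ip_def by simp

lemma ip_nonneg: "ip n u u \<ge> 0"
  unfolding ip_def by (rule sum_nonneg) (metis cnj_mult_self_nonneg mult.commute)

lemma ip_zero: assumes "ip n u u = 0" "i < n" shows "u i = 0"
proof -
  have "\<forall>j\<in>{..<n}. u j * cnj (u j) = 0"
    using assms(1) unfolding ip_def
    by (subst sum_nonneg_eq_0_iff[symmetric]) (auto intro: sum_nonneg simp: cnj_mult_self_nonneg mult.commute[of "u _"])
  then show ?thesis using assms(2) by auto
qed

definition coef :: "nat \<Rightarrow> (nat \<Rightarrow> complex) \<Rightarrow> (nat \<Rightarrow> complex) \<Rightarrow> complex" where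
  "coef n w u = ip n w u / ip n u u"

definition proj :: "nat \<Rightarrow> (nat \<Rightarrow> complex) list \<Rightarrow> (nat \<Rightarrow> complex) \<Rightarrow> nat \<Rightarrow> complex" where
  "proj n us w = (\<lambda>i. \<Sum>k<length us. coef n w (us!k) * (us!k) i)"

definition orthl :: "nat \<Rightarrow> (nat \<Rightarrow> complex) list \<Rightarrow> bool" where
  "orthl n us \<longleftrightarrow> (\<forall>k<length us. ip n (us!k) (us!k) \<noteq> 0) \<and>
     (\<forall>k<length us. \<forall>k'<length us. k \<noteq> k' \<longrightarrow> ip n (us!k) (us!k') = 0)"

definition inrange :: "nat \<Rightarrow> complex mat \<Rightarrow> (nat \<Rightarrow> complex) \<Rightarrow> bool" where
  "inrange n R u \<longleftrightarrow> (\<exists>z. \<forall>i<n. u i = (\<Sum>l<n. R $$ (i,l) * z l))"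

definition fixedp :: "nat \<Rightarrow> (nat \<Rightarrow> complex) list \<Rightarrow> (nat \<Rightarrow> complex) \<Rightarrow> bool" where
  "fixedp n us w \<longleftrightarrow> (\<forall>i<n. proj n us w i = w i)"

fun gs :: "nat \<Rightarrow> (nat \<Rightarrow> complex) list \<Rightarrow> (nat \<Rightarrow> complex) list \<Rightarrow> (nat \<Rightarrow> complex) list" where
  "gs n [] acc = acc"
| "gs n (w#ws) acc = (if (\<forall>i<n. w i - proj n acc w i = 0) then gs n ws acc
      else gs n ws (acc @ [(\<lambda>i. w i - proj n acc w i)]))"

lemma ip_proj: "ip n (proj n us w) v = (\<Sum>k<length us. coef n w (us!k) * ip n (us!k) v)"
  unfolding proj_def by (simp add: ip_sum ip_scale)

lemma ip_proj_mem: assumes "orthl n us" "j < length us"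
  shows "ip n (proj n us w) (us!j) = ip n w (us!j)"
proof -
  have "ip n (proj n us w) (us!j) = (\<Sum>k<length us. if k = j then coef n w (us!j) * ip n (us!j) (us!j) else 0)"
    unfolding ip_proj using assms unfolding orthl_def by (intro sum.cong refl) auto
  also have "\<dots> = coef n w (us!j) * ip n (us!j) (us!j)" using assms(2) by (simp add: sum_if_eq)
  also have "\<dots> = ip n w (us!j)" using assms unfolding orthl_def coef_def by simp
  finally show ?thesis .
qed

lemma ip_resid: assumes "orthl n us" "j < length us"
  shows "ip n (\<lambda>i. w i - proj n us w i) (us!j) = 0"
  using ip_proj_mem[OF assms] by (simp add: ip_diff)

lemma proj_snoc: "proj n (us @ [u]) x i = proj n us x i + coef n x u * u i"
  unfolding proj_def by (simp add: nth_append)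

lemma ip_proj_orth: assumes "\<forall>k<length us. ip n (us!k) v = 0"
  shows "ip n (proj n us x) v = 0"
  unfolding ip_proj using assms by simp

lemma gs_main:
  "orthl n acc \<Longrightarrow> (\<forall>k<length acc. inrange n R (acc!k)) \<Longrightarrow> (\<forall>w\<in>set ws. inrange n R w) \<Longrightarrow>
   orthl n (gs n ws acc) \<and> (\<forall>k<length (gs n ws acc). inrange n R (gs n ws acc ! k)) \<and>
   (\<forall>w\<in>set ws. fixedp n (gs n ws acc) w) \<and> (\<forall>x. fixedp n acc x \<longrightarrow> fixedp n (gs n ws acc) x)"
proof (induction ws arbitrary: acc)
  case Nil then show ?case by simp
next
  case (Cons w ws)
  define w' where "w' = (\<lambda>i. w i - proj n acc w i)"
  show ?case
  proof (cases "\<forall>i<n. w i - proj n acc w i = 0")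
    case True
    then have fw: "fixedp n acc w" unfolding fixedp_def by simp
    have "gs n (w#ws) acc = gs n ws acc" using True by simp
    then show ?thesis using Cons.IH[OF Cons.prems(1,2)] Cons.prems(3) fw by auto
  next
    case False
    then have g: "gs n (w#ws) acc = gs n ws (acc @ [w'])" unfolding w'_def gs.simps if_not_P[OF False] by simp
    have nz: "ip n w' w' \<noteq> 0" using False ip_zero unfolding w'_def by blast
    have o1: "\<forall>k<length acc. ip n w' (acc!k) = 0" unfolding w'_def using ip_resid[OF Cons.prems(1)] by auto
    have o2: "\<forall>k<length acc. ip n (acc!k) w' = 0" using o1 ip_cnj by (metis complex_cnj_zero)
    have orth: "orthl n (acc @ [w'])"
      unfolding orthl_def
    proof (intro conjI allI impI)
      fix k assume "k < length (acc @ [w'])"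
      then show "ip n ((acc @ [w']) ! k) ((acc @ [w']) ! k) \<noteq> 0"
        using Cons.prems(1) nz unfolding orthl_def by (cases "k < length acc") (auto simp: nth_append)
    next
      fix k k' assume "k < length (acc @ [w'])" "k' < length (acc @ [w'])" "k \<noteq> k'"
      then show "ip n ((acc @ [w']) ! k) ((acc @ [w']) ! k') = 0"
        using Cons.prems(1) o1 o2 unfolding orthl_def
        by (cases "k < length acc"; cases "k' < length acc") (auto simp: nth_append)
    qed
    have rw: "inrange n R w" using Cons.prems(3) by simp
    then obtain zw where zw: "\<forall>i<n. w i = (\<Sum>l<n. R $$ (i,l) * zw l)" unfolding inrange_def by blast
    have "\<forall>k. \<exists>z. k < length acc \<longrightarrow> (\<forall>i<n. (acc!k) i = (\<Sum>l<n. R $$ (i,l) * z l))"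
      using Cons.prems(2) unfolding inrange_def by metis
    then obtain Z where Z: "\<And>k. k < length acc \<Longrightarrow> \<forall>i<n. (acc!k) i = (\<Sum>l<n. R $$ (i,l) * Z k l)"
      by metis
    have rw': "inrange n R w'" unfolding inrange_def
    proof (rule exI[of _ "\<lambda>l. zw l - (\<Sum>k<length acc. coef n w (acc!k) * Z k l)"], intro allI impI)
      fix i assume i: "i < n"
      have "proj n acc w i = (\<Sum>k<length acc. coef n w (acc!k) * (\<Sum>l<n. R $$ (i,l) * Z k l))"
        unfolding proj_def using Z i by simp
      also have "\<dots> = (\<Sum>l<n. R $$ (i,l) * (\<Sum>k<length acc. coef n w (acc!k) * Z k l))"
        by (simp add: sum_distrib_left sum.swap[of _ "{..<length acc}"] ac_simps)
      finally show "w' i = (\<Sum>l<n. R $$ (i,l) * (zw l - (\<Sum>k<length acc. coef n w (acc!k) * Z k l)))"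
        unfolding w'_def using zw i by (simp add: algebra_simps sum_subtractf)
    qed
    have rng: "\<forall>k<length (acc @ [w']). inrange n R ((acc @ [w']) ! k)"
      using Cons.prems(2) rw' by (auto simp: nth_append)
    have fx: "fixedp n (acc @ [w']) x" if "fixedp n acc x" for x
    proof -
      have "ip n x w' = ip n (proj n acc x) w'" using that unfolding fixedp_def by (intro ip_cong) auto
      also have "\<dots> = 0" by (rule ip_proj_orth) (use o2 in auto)
      finally show ?thesis using that unfolding fixedp_def by (simp add: proj_snoc coef_def)
    qed
    have fw: "fixedp n (acc @ [w']) w"
    proof -
      have "ip n w w' = ip n (\<lambda>i. w' i + proj n acc w i) w'" unfolding w'_def by (intro ip_cong) auto
      also have "\<dots> = ip n w' w'" using ip_proj_orth[of acc n w' w] o2 by (simp add: ip_add)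
      finally have "coef n w w' = 1" unfolding coef_def using nz by simp
      then show ?thesis unfolding fixedp_def by (simp add: proj_snoc w'_def)
    qed
    have IH: "orthl n (gs n ws (acc @ [w'])) \<and> (\<forall>k<length (gs n ws (acc @ [w'])). inrange n R (gs n ws (acc @ [w']) ! k)) \<and>
      (\<forall>w\<in>set ws. fixedp n (gs n ws (acc @ [w'])) w) \<and> (\<forall>x. fixedp n (acc @ [w']) x \<longrightarrow> fixedp n (gs n ws (acc @ [w'])) x)"
      by (rule Cons.IH[OF orth rng]) (use Cons.prems(3) in auto)
    show ?thesis unfolding g using IH fx fw by auto
  qed
qed

lemma div_nonneg_c: "0 \<le> x \<Longrightarrow> 0 \<le> N \<Longrightarrow> 0 \<le> x / (N::complex)"
  by (auto simp: less_eq_complex_def Re_divide Im_divide)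

lemma ip_real: "cnj (ip n u u) = ip n u u" using ip_cnj by simp

lemma ip_diff2: "ip n u (\<lambda>i. a i - b i) = ip n u a - ip n u b"
  by (metis ip_cnj ip_diff complex_cnj_diff)

lemma bessel:
  fixes u :: "'s \<Rightarrow> nat \<Rightarrow> complex"
  assumes fin: "finite I" and nz: "\<And>s. s \<in> I \<Longrightarrow> ip n (u s) (u s) \<noteq> 0"
    and orth: "\<And>s t. s \<in> I \<Longrightarrow> t \<in> I \<Longrightarrow> s \<noteq> t \<Longrightarrow> ip n (u s) (u t) = 0"
  shows "(\<Sum>s\<in>I. cnj (ip n w (u s)) * ip n w (u s) / ip n (u s) (u s)) \<le> ip n w w"
proof -
  define c where "c = (\<lambda>s. ip n w (u s) / ip n (u s) (u s))"
  define p where "p = (\<lambda>i. \<Sum>s\<in>I. c s * u s i)"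
  define S where "S = (\<Sum>s\<in>I. cnj (ip n w (u s)) * ip n w (u s) / ip n (u s) (u s))"
  have pv: "ip n p q = (\<Sum>s\<in>I. c s * ip n (u s) q)" for q
    unfolding p_def by (simp add: ip_sum ip_scale)
  have pw: "ip n p w = S" unfolding pv S_def c_def
    by (rule sum.cong[OF refl]) (simp add: ip_cnj[of n "u _" w, symmetric])
  have Sr: "cnj S = S" unfolding S_def cnj_sum
    by (rule sum.cong[OF refl]) (simp add: ip_real)
  have wp: "ip n w p = S" using pw Sr ip_cnj by metis
  have pu: "ip n p (u t) = ip n w (u t)" if t: "t \<in> I" for t
  proof -
    have "ip n p (u t) = (\<Sum>s\<in>I. if s = t then c t * ip n (u t) (u t) else 0)"
      unfolding p_def by (simp add: ip_sum ip_scale) (rule sum.cong, auto simp: orth t)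
    also have "\<dots> = c t * ip n (u t) (u t)" using fin t by simp
    also have "\<dots> = ip n w (u t)" unfolding c_def using nz[OF t] by simp
    finally show ?thesis .
  qed
  have pp: "ip n p p = S"
  proof -
    have "ip n p p = (\<Sum>s\<in>I. c s * ip n (u s) p)" by (rule pv)
    also have "\<dots> = (\<Sum>s\<in>I. c s * cnj (ip n w (u s)))"
      by (rule sum.cong[OF refl]) (metis ip_cnj pu)
    also have "\<dots> = S" unfolding S_def c_def by (simp add: ac_simps)
    finally show ?thesis .
  qed
  have "0 \<le> ip n (\<lambda>i. w i - p i) (\<lambda>i. w i - p i)" by (rule ip_nonneg)
  also have "\<dots> = ip n w w - S" by (simp add: ip_diff ip_diff2 pw wp pp)
  finally show ?thesis unfolding S_def by simp
qed

definition Qm :: "nat \<Rightarrow> (nat \<Rightarrow> complex) list \<Rightarrow> complex mat" where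
  "Qm n us = mat n n (\<lambda>(i,l). \<Sum>k<length us. (us!k) i * cnj ((us!k) l) / ip n (us!k) (us!k))"

lemma hf_Qm: "hf n (\<lambda>i l. Qm n us $$ (i,l)) w =
   (\<Sum>k<length us. cnj (ip n w (us!k)) * ip n w (us!k) / ip n (us!k) (us!k))"
proof -
  have "hf n (\<lambda>i l. Qm n us $$ (i,l)) w =
     (\<Sum>i<n. \<Sum>l<n. \<Sum>k<length us. cnj (w i) * (us!k) i * (cnj ((us!k) l) * w l) / ip n (us!k) (us!k))"
    unfolding hf_def Qm_def by (simp add: sum_distrib_left sum_distrib_right ac_simps)
  also have "\<dots> = (\<Sum>k<length us. \<Sum>i<n. \<Sum>l<n. cnj (w i) * (us!k) i * (cnj ((us!k) l) * w l) / ip n (us!k) (us!k))"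
    by (subst sum.swap, rule sum.cong[OF refl], rule sum.swap)
  also have "\<dots> = (\<Sum>k<length us. cnj (ip n w (us!k)) * ip n w (us!k) / ip n (us!k) (us!k))"
  proof (rule sum.cong[OF refl])
    fix k
    have "cnj (ip n w (us!k)) * ip n w (us!k) = (\<Sum>i<n. cnj (w i) * (us!k) i) * (\<Sum>l<n. cnj ((us!k) l) * w l)"
      unfolding ip_def cnj_sum by (simp add: ac_simps)
    also have "\<dots> = (\<Sum>i<n. \<Sum>l<n. cnj (w i) * (us!k) i * (cnj ((us!k) l) * w l))"
      by (rule sum_product)
    finally show "(\<Sum>i<n. \<Sum>l<n. cnj (w i) * (us!k) i * (cnj ((us!k) l) * w l) / ip n (us!k) (us!k)) =
       cnj (ip n w (us!k)) * ip n w (us!k) / ip n (us!k) (us!k)"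
      by (simp add: sum_divide_distrib)
  qed
  finally show ?thesis .
qed

lemma Qm_psd: assumes "orthl n us" shows "psd n (Qm n us)"
  unfolding psd_iff psdf_def
proof (intro conjI allI)
  show "Qm n us \<in> carrier_mat n n" unfolding Qm_def by simp
  fix w
  show "hf n (\<lambda>i l. Qm n us $$ (i,l)) w \<ge> 0" unfolding hf_Qm
    by (intro sum_nonneg div_nonneg_c ip_nonneg cnj_mult_self_nonneg)
qed

lemma hf_one_minus: assumes "A \<in> carrier_mat n n"
  shows "hf n (\<lambda>i l. (1\<^sub>m n - A) $$ (i,l)) w = ip n w w - hf n (\<lambda>i l. A $$ (i,l)) w"
proof -
  have "hf n (\<lambda>i l. (1\<^sub>m n - A) $$ (i,l)) w = (\<Sum>i<n. \<Sum>l<n. (if i = l then cnj (w i) * w l else 0) - cnj (w i) * A $$ (i,l) * w l)"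
    unfolding hf_def using assms by (intro sum.cong refl) (auto simp: algebra_simps)
  also have "\<dots> = ip n w w - hf n (\<lambda>i l. A $$ (i,l)) w"
    unfolding hf_def ip_def by (simp add: sum_subtractf sum_if_eq' ac_simps)
  finally show ?thesis .
qed

lemma one_minus_Qm_psd: assumes "orthl n us" shows "psd n (1\<^sub>m n - Qm n us)"
  unfolding psd_iff psdf_def
proof (intro conjI allI)
  have Qc: "Qm n us \<in> carrier_mat n n" unfolding Qm_def by simp
  then show "1\<^sub>m n - Qm n us \<in> carrier_mat n n" by (rule minus_carrier_mat)
  fix w
  have "(\<Sum>k\<in>{..<length us}. cnj (ip n w (us!k)) * ip n w (us!k) / ip n (us!k) (us!k)) \<le> ip n w w"
    by (rule bessel) (use assms in \<open>auto simp: orthl_def\<close>)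
  then show "hf n (\<lambda>i l. (1\<^sub>m n - Qm n us) $$ (i,l)) w \<ge> 0"
    unfolding hf_one_minus[OF Qc] hf_Qm by simp
qed

definition colsf :: "nat \<Rightarrow> complex mat \<Rightarrow> (nat \<Rightarrow> complex) list" where
  "colsf n R = map (\<lambda>j i. R $$ (i,j)) [0..<n]"

definition U :: "nat \<Rightarrow> complex mat \<Rightarrow> (nat \<Rightarrow> complex) list" where
  "U n R = gs n (colsf n R) []"

lemma U_props:
  shows "orthl n (U n R)" "\<forall>k<length (U n R). inrange n R (U n R ! k)"
    "\<forall>j<n. fixedp n (U n R) (\<lambda>i. R $$ (i,j))"
proof -
  have c: "\<forall>w\<in>set (colsf n R). inrange n R w"
  proof
    fix w assume "w \<in> set (colsf n R)"
    then obtain j where j: "j < n" and w: "w = (\<lambda>i. R $$ (i,j))" unfolding colsf_def by auto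
    show "inrange n R w" unfolding inrange_def
    proof (rule exI[of _ "\<lambda>l. if l = j then 1 else 0"], intro allI impI)
      fix i assume "i < n"
      show "w i = (\<Sum>l<n. R $$ (i,l) * (if l = j then 1 else 0))"
        unfolding w by (simp only: mult_if0) (simp add: sum_if_eq[OF j])
    qed
  qed
  have o: "orthl n []" unfolding orthl_def by simp
  have G: "orthl n (U n R) \<and> (\<forall>k<length (U n R). inrange n R (U n R ! k)) \<and>
   (\<forall>w\<in>set (colsf n R). fixedp n (U n R) w)"
    unfolding U_def using gs_main[OF o _ c] by auto
  then show "orthl n (U n R)" "\<forall>k<length (U n R). inrange n R (U n R ! k)" by auto
  show "\<forall>j<n. fixedp n (U n R) (\<lambda>i. R $$ (i,j))"
    using G unfolding colsf_def by auto
qed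

lemma Qm_fix:
  assumes f: "fixedp n us (\<lambda>i. R $$ (i,j))" and i: "i < n"
  shows "(\<Sum>l<n. Qm n us $$ (i,l) * R $$ (l,j)) = R $$ (i,j)"
proof -
  have "(\<Sum>l<n. Qm n us $$ (i,l) * R $$ (l,j)) =
     (\<Sum>l<n. \<Sum>k<length us. R $$ (l,j) * cnj ((us!k) l) / ip n (us!k) (us!k) * (us!k) i)"
    unfolding Qm_def using i by (simp add: sum_distrib_right sum_distrib_left ac_simps)
  also have "\<dots> = (\<Sum>k<length us. (\<Sum>l<n. R $$ (l,j) * cnj ((us!k) l)) / ip n (us!k) (us!k) * (us!k) i)"
    by (subst sum.swap) (simp add: sum_distrib_right sum_divide_distrib)
  also have "\<dots> = proj n us (\<lambda>i. R $$ (i,j)) i"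
    unfolding proj_def coef_def ip_def by simp
  also have "\<dots> = R $$ (i,j)" using f i unfolding fixedp_def by simp
  finally show ?thesis .
qed

lemma rhox_entry:
  assumes Xc: "X \<in> carrier_mat dA dA" and R: "\<rho> \<in> carrier_mat (dA*dB) (dA*dB)"
    and b: "\<beta> < dB" "\<beta>' < dB"
  shows "ptrA dA dB (kron X (1\<^sub>m dB) * \<rho>) $$ (\<beta>,\<beta>') = (\<Sum>a<dA. \<Sum>a'<dA. X $$ (a,a') * \<rho> $$ (a'*dB+\<beta>, a*dB+\<beta>'))"
proof -
  have Kc: "kron X (1\<^sub>m dB) \<in> carrier_mat (dA*dB) (dA*dB)" unfolding kron_def using Xc by auto
  have e: "(kron X (1\<^sub>m dB) * \<rho>) $$ (a*dB+\<beta>, a*dB+\<beta>') = (\<Sum>a'<dA. X $$ (a,a') * \<rho> $$ (a'*dB+\<beta>, a*dB+\<beta>'))"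
    if a: "a < dA" for a
  proof -
    have ia: "a*dB+\<beta> < dA*dB" "a*dB+\<beta>' < dA*dB" using idx_lt a b by auto
    have "(kron X (1\<^sub>m dB) * \<rho>) $$ (a*dB+\<beta>, a*dB+\<beta>') = (\<Sum>l<dA*dB. kron X (1\<^sub>m dB) $$ (a*dB+\<beta>, l) * \<rho> $$ (l, a*dB+\<beta>'))"
      using Kc R ia by (simp add: scalar_prod_def lessThan_atLeast0)
    also have "\<dots> = (\<Sum>a'<dA. \<Sum>\<gamma><dB. kron X (1\<^sub>m dB) $$ (a*dB+\<beta>, a'*dB+\<gamma>) * \<rho> $$ (a'*dB+\<gamma>, a*dB+\<beta>'))"
      by (rule sum_split_prod)
    also have "\<dots> = (\<Sum>a'<dA. \<Sum>\<gamma><dB. if \<gamma> = \<beta> then X $$ (a,a') * \<rho> $$ (a'*dB+\<gamma>, a*dB+\<beta>') else 0)"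
      using Xc a b by (intro sum.cong refl) (auto simp: kron_def idx_lt)
    also have "\<dots> = (\<Sum>a'<dA. X $$ (a,a') * \<rho> $$ (a'*dB+\<beta>, a*dB+\<beta>'))"
      using b by (simp add: sum_if_eq)
    finally show ?thesis .
  qed
  show ?thesis unfolding ptrA_def using b e by simp
qed

lemma hf_blockdiag:
  assumes "\<And>i j. i < m*k \<Longrightarrow> j < m*k \<Longrightarrow> p i j = (if i div k = j div k then q (i div k) (i mod k) (j mod k) else 0)"
  shows "hf (m*k) p v = (\<Sum>x<m. hf k (q x) (\<lambda>\<beta>. v (x*k+\<beta>)))"
proof -
  have e: "p (x*k+\<beta>) (y*k+\<beta>') = (if x = y then q x \<beta> \<beta>' else 0)"
    if "x < m" "y < m" "\<beta> < k" "\<beta>' < k" for x y \<beta> \<beta>'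
    using that assms[OF idx_lt[of x m \<beta> k] idx_lt[of y m \<beta>' k]] by auto
  have "hf (m*k) p v = (\<Sum>x<m. \<Sum>\<beta><k. \<Sum>y<m. \<Sum>\<beta>'<k. cnj (v (x*k+\<beta>)) * p (x*k+\<beta>) (y*k+\<beta>') * v (y*k+\<beta>'))"
    by (simp add: hf_split)
  also have "\<dots> = (\<Sum>x<m. \<Sum>\<beta><k. \<Sum>y<m. if x = y then (\<Sum>\<beta>'<k. cnj (v (x*k+\<beta>)) * q x \<beta> \<beta>' * v (x*k+\<beta>')) else 0)"
    by (intro sum.cong refl) (auto simp: e)
  also have "\<dots> = (\<Sum>x<m. hf k (q x) (\<lambda>\<beta>. v (x*k+\<beta>)))"
    unfolding hf_def by (simp add: sum_if_eq')
  finally show ?thesis .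
qed

lemma trace_blockdiag:
  assumes A: "A \<in> carrier_mat (m*k) (m*k)" and M: "M \<in> carrier_mat (m*k) (m*k)"
    and e: "\<And>i j. i < m*k \<Longrightarrow> j < m*k \<Longrightarrow> A $$ (i,j) = (if i div k = j div k then q (i div k) (i mod k) (j mod k) else 0)"
  shows "mtrace (A * M) = (\<Sum>x<m. \<Sum>\<beta><k. \<Sum>\<beta>'<k. q x \<beta> \<beta>' * M $$ (x*k+\<beta>', x*k+\<beta>))"
proof -
  have e': "A $$ (x*k+\<beta>, y*k+\<beta>') = (if x = y then q x \<beta> \<beta>' else 0)"
    if "x < m" "y < m" "\<beta> < k" "\<beta>' < k" for x y \<beta> \<beta>'
    using that e[OF idx_lt[of x m \<beta> k] idx_lt[of y m \<beta>' k]] by auto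
  have "mtrace (A * M) = (\<Sum>i<m*k. \<Sum>l<m*k. A $$ (i,l) * M $$ (l,i))" by (rule mtrace_mult[OF A M])
  also have "\<dots> = (\<Sum>x<m. \<Sum>\<beta><k. \<Sum>y<m. \<Sum>\<beta>'<k. A $$ (x*k+\<beta>, y*k+\<beta>') * M $$ (y*k+\<beta>', x*k+\<beta>))"
    by (simp add: sum_split_prod)
  also have "\<dots> = (\<Sum>x<m. \<Sum>\<beta><k. \<Sum>y<m. if x = y then (\<Sum>\<beta>'<k. q x \<beta> \<beta>' * M $$ (x*k+\<beta>', x*k+\<beta>)) else 0)"
    by (intro sum.cong refl) (auto simp: e')
  also have "\<dots> = (\<Sum>x<m. \<Sum>\<beta><k. \<Sum>\<beta>'<k. q x \<beta> \<beta>' * M $$ (x*k+\<beta>', x*k+\<beta>))"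
    by (simp add: sum_if_eq')
  finally show ?thesis .
qed

definition one1 :: "complex \<Rightarrow> complex mat" where "one1 c = mat 1 1 (\<lambda>_. c)"

lemma psd_one1: assumes c: "0 \<le> c" shows "psd 1 (one1 c)"
  unfolding psd_iff psdf_def
proof (intro conjI allI)
  show "one1 c \<in> carrier_mat 1 1" unfolding one1_def by simp
  fix v
  have "hf 1 (\<lambda>i l. one1 c $$ (i,l)) v = c * (cnj (v 0) * v 0)" by (simp add: hf_def one1_def)
  then show "hf 1 (\<lambda>i l. one1 c $$ (i,l)) v \<ge> 0" using c cnj_mult_self_nonneg by (simp add: mult_nonneg_nonneg)
qed

lemma meas2_four:
  assumes M: "M \<in> carrier_mat N N"
  shows "meas 2 Y M = four_block_mat (one1 (mtrace (Y 0 * M))) (0\<^sub>m 1 1) (0\<^sub>m 1 1) (one1 (mtrace (Y 1 * M)))"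
proof (rule eq_matI)
  fix i j assume "i < dim_row (four_block_mat (one1 (mtrace (Y 0 * M))) (0\<^sub>m 1 1) (0\<^sub>m 1 1) (one1 (mtrace (Y 1 * M))))"
    "j < dim_col (four_block_mat (one1 (mtrace (Y 0 * M))) (0\<^sub>m 1 1) (0\<^sub>m 1 1) (one1 (mtrace (Y 1 * M))))"
  then have "i = 0 \<or> i = 1" "j = 0 \<or> j = 1" by (auto simp: one1_def)
  then show "meas 2 Y M $$ (i,j) = four_block_mat (one1 (mtrace (Y 0 * M))) (0\<^sub>m 1 1) (0\<^sub>m 1 1) (one1 (mtrace (Y 1 * M))) $$ (i,j)"
    by (elim disjE) (simp_all add: meas_def one1_def)
qed (auto simp: meas_def one1_def)

lemma D_one1_nonneg:
  assumes D: "relK b D" and b: "b > 1" and t0: "0 \<le> t" and t1: "t \<le> 1"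
  shows "D (one1 1) (one1 t) \<ge> 0"
proof -
  have S: "psd 1 (one1 1)" by (rule psd_one1) (simp add: less_eq_complex_def)
  have Sd: "density 1 (one1 1)" unfolding density_def using S by (simp add: mtrace_def one1_def)
  have SS: "D (one1 1) (one1 1) = 0" using D Sd unfolding relK_def by blast
  define r where "r = Re t"
  have r: "t = of_real r" "0 \<le> r" "r \<le> 1" using t0 t1 unfolding r_def
    by (auto simp: less_eq_complex_def complex_eq_iff)
  show ?thesis
  proof (cases "r = 0")
    case True
    have "one1 t + one1 1 = one1 1" using True r by (auto simp: one1_def)
    then have "D (one1 1) (one1 1) \<le> D (one1 1) (one1 t)"
      using D_mono[OF D S psd_one1[OF t0] S] by simp
    then show ?thesis using SS by simp
  next
    case False
    then have rp: "r > 0" using r by simp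
    have e: "one1 t = complex_of_real r \<cdot>\<^sub>m one1 1" using r by (auto simp: one1_def)
    have "D (one1 1) (complex_of_real r \<cdot>\<^sub>m one1 1) = D (one1 1) (one1 1) + ereal (log b (1 / r))"
      using D S rp unfolding relK_def by blast
    moreover have "log b (1 / r) \<ge> 0" using b rp r by simp
    ultimately show ?thesis using SS e by simp
  qed
qed

definition BD :: "nat \<Rightarrow> nat \<Rightarrow> (nat \<Rightarrow> complex mat) \<Rightarrow> complex mat" where
  "BD m k Q = mat (m*k) (m*k) (\<lambda>(i,j). if i div k = j div k then Q (i div k) $$ (i mod k, j mod k) else 0)"

lemma BD_carrier: "BD m k Q \<in> carrier_mat (m*k) (m*k)" unfolding BD_def by simp

lemma BD_psd: assumes "\<forall>x<m. psd k (Q x)" shows "psd (m*k) (BD m k Q)"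
  unfolding psd_iff psdf_def
proof (intro conjI allI)
  show "BD m k Q \<in> carrier_mat (m*k) (m*k)" by (rule BD_carrier)
  fix v
  have "hf (m*k) (\<lambda>i l. BD m k Q $$ (i,l)) v = (\<Sum>x<m. hf k (\<lambda>a b. Q x $$ (a,b)) (\<lambda>\<beta>. v (x*k+\<beta>)))"
    by (rule hf_blockdiag) (simp add: BD_def)
  also have "\<dots> \<ge> 0" using assms unfolding psd_iff psdf_def by (auto intro!: sum_nonneg)
  finally show "hf (m*k) (\<lambda>i l. BD m k Q $$ (i,l)) v \<ge> 0" .
qed

lemma div_mod_eq_iff: "(i::nat) = j \<longleftrightarrow> i div k = j div k \<and> i mod k = j mod k"
  by (metis div_mult_mod_eq)

lemma one_minus_BD_psd: assumes "\<forall>x<m. Q x \<in> carrier_mat k k \<and> psd k (1\<^sub>m k - Q x)"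
  shows "psd (m*k) (1\<^sub>m (m*k) - BD m k Q)"
  unfolding psd_iff psdf_def
proof (intro conjI allI)
  show "1\<^sub>m (m*k) - BD m k Q \<in> carrier_mat (m*k) (m*k)" by (rule minus_carrier_mat[OF BD_carrier])
  fix v
  have "hf (m*k) (\<lambda>i l. (1\<^sub>m (m*k) - BD m k Q) $$ (i,l)) v = (\<Sum>x<m. hf k (\<lambda>a b. (1\<^sub>m k - Q x) $$ (a,b)) (\<lambda>\<beta>. v (x*k+\<beta>)))"
  proof (rule hf_blockdiag)
    fix i j assume i: "i < m*k" and j: "j < m*k"
    have k: "k > 0" using i by (cases k) auto
    have x: "i div k < m" using i k by (auto simp: div_less_iff_less_mult)
    have b: "i mod k < k" "j mod k < k" using k by auto
    have Qc: "Q (i div k) \<in> carrier_mat k k" using assms x by auto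
    show "(1\<^sub>m (m*k) - BD m k Q) $$ (i,j) = (if i div k = j div k then (1\<^sub>m k - Q (i div k)) $$ (i mod k, j mod k) else 0)"
      using i j b Qc by (auto simp: BD_def div_mod_eq_iff[of i j k])
  qed
  also have "\<dots> \<ge> 0" using assms unfolding psd_iff psdf_def by (auto intro!: sum_nonneg)
  finally show "hf (m*k) (\<lambda>i l. (1\<^sub>m (m*k) - BD m k Q) $$ (i,l)) v \<ge> 0" .
qed

lemma BD_povm:
  assumes "\<forall>x<m. psd k (Q x)" "\<forall>x<m. Q x \<in> carrier_mat k k \<and> psd k (1\<^sub>m k - Q x)"
  shows "povm (m*k) 2 (\<lambda>j. if j = 0 then BD m k Q else 1\<^sub>m (m*k) - BD m k Q)"
  unfolding povm_def
proof (intro conjI allI impI)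
  fix j :: nat assume "j < 2"
  then show "psd (m*k) (if j = 0 then BD m k Q else 1\<^sub>m (m*k) - BD m k Q)"
    using BD_psd[OF assms(1)] one_minus_BD_psd[OF assms(2)] by auto
next
  fix i i' assume "i < m*k" "i' < m*k"
  then show "(\<Sum>j<(2::nat). (if j = 0 then BD m k Q else 1\<^sub>m (m*k) - BD m k Q) $$ (i,i')) = (if i = i' then 1 else 0)"
    using BD_carrier[of m k Q] by (simp add: numeral_2_eq_2)
qed

lemma kron_one_entry:
  assumes Sc: "\<sigma> \<in> carrier_mat k k" and "x < m" "y < m" "\<beta> < k" "\<beta>' < k"
  shows "kron (1\<^sub>m m) \<sigma> $$ (x*k+\<beta>, y*k+\<beta>') = (if x = y then \<sigma> $$ (\<beta>,\<beta>') else 0)"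
  unfolding kron_def using assms idx_lt[of x m \<beta> k] idx_lt[of y m \<beta>' k] by auto

lemma mtrace_one_minus:
  assumes A: "A \<in> carrier_mat N N" and M: "M \<in> carrier_mat N N"
  shows "mtrace ((1\<^sub>m N - A) * M) = mtrace M - mtrace (A * M)"
proof -
  have c: "1\<^sub>m N - A \<in> carrier_mat N N" by (rule minus_carrier_mat[OF A])
  have "mtrace ((1\<^sub>m N - A) * M) = (\<Sum>i<N. \<Sum>l<N. (if i = l then M $$ (l,i) else 0) - A $$ (i,l) * M $$ (l,i))"
    unfolding mtrace_mult[OF c M] using A by (intro sum.cong refl) (auto simp: algebra_simps)
  also have "\<dots> = mtrace M - mtrace (A * M)"
    unfolding mtrace_mult[OF A M] using M by (simp add: sum_subtractf sum_if_eq' mtrace_def)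
  finally show ?thesis .
qed

lemma global_psdf:
  fixes Us :: "nat \<Rightarrow> (nat \<Rightarrow> complex) list"
  assumes oe: "\<forall>x<m. orthl n (Us x)"
    and cr: "\<forall>x<m. \<forall>y<m. x \<noteq> y \<longrightarrow> (\<forall>k<length (Us x). \<forall>k'<length (Us y). ip n (Us x ! k) (Us y ! k') = 0)"
  shows "psdf n (\<lambda>i l. (if i = l then 1 else 0) - (\<Sum>x<m. Qm n (Us x) $$ (i,l)))"
  unfolding psdf_def
proof
  fix w
  define I where "I = (SIGMA x:{..<m}. {..<length (Us x)})"
  define u where "u = (\<lambda>s. Us (fst s) ! snd s)"
  have "hf n (\<lambda>i l. (if i = l then 1 else 0) - (\<Sum>x<m. Qm n (Us x) $$ (i,l))) w
     = ip n w w - hf n (\<lambda>i l. \<Sum>x<m. Qm n (Us x) $$ (i,l)) w"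
  proof -
    have d: "hf n (\<lambda>i l. (if i = l then 1 else 0) - (\<Sum>x<m. Qm n (Us x) $$ (i,l))) w
      = hf n (\<lambda>i l. if i = l then 1 else 0) w - hf n (\<lambda>i l. \<Sum>x<m. Qm n (Us x) $$ (i,l)) w"
      unfolding hf_def by (simp add: algebra_simps sum_subtractf)
    have "hf n (\<lambda>i l. if i = l then 1 else 0) w = (\<Sum>i<n. \<Sum>l<n. if i = l then cnj (w i) * w l else 0)"
      unfolding hf_def by (intro sum.cong refl) auto
    also have "\<dots> = ip n w w" unfolding ip_def by (simp add: sum_if_eq' mult.commute)
    finally show ?thesis using d by simp
  qed
  also have "hf n (\<lambda>i l. \<Sum>x<m. Qm n (Us x) $$ (i,l)) w = (\<Sum>x<m. hf n (\<lambda>i l. Qm n (Us x) $$ (i,l)) w)"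
    by (rule hf_sum) simp
  also have "\<dots> = (\<Sum>s\<in>I. cnj (ip n w (u s)) * ip n w (u s) / ip n (u s) (u s))"
    unfolding hf_Qm I_def u_def by (simp add: sum.Sigma split_def)
  finally have e: "hf n (\<lambda>i l. (if i = l then 1 else 0) - (\<Sum>x<m. Qm n (Us x) $$ (i,l))) w
     = ip n w w - (\<Sum>s\<in>I. cnj (ip n w (u s)) * ip n w (u s) / ip n (u s) (u s))" .
  have "(\<Sum>s\<in>I. cnj (ip n w (u s)) * ip n w (u s) / ip n (u s) (u s)) \<le> ip n w w"
  proof (rule bessel)
    show "finite I" unfolding I_def by simp
    fix s assume "s \<in> I"
    then show "ip n (u s) (u s) \<noteq> 0" using oe unfolding I_def u_def orthl_def by auto
  next
    fix s t assume st: "s \<in> I" "t \<in> I" "s \<noteq> t"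
    obtain x k y k' where s: "s = (x,k)" and t: "t = (y,k')" by (cases s, cases t)
    show "ip n (u s) (u t) = 0"
    proof (cases "x = y")
      case True
      then have "k \<noteq> k'" using st s t by auto
      then show ?thesis using oe st s t True unfolding I_def u_def orthl_def by auto
    next
      case False
      then show ?thesis using cr st s t unfolding I_def u_def by auto
    qed
  qed
  then show "hf n (\<lambda>i l. (if i = l then 1 else 0) - (\<Sum>x<m. Qm n (Us x) $$ (i,l))) w \<ge> 0"
    unfolding e by simp
qed

lemma part2:
  assumes D: "relK b D" and b: "b > 1" and P: "povm dA m X" and R: "density (dA*dB) \<rho>"
    and O: "\<forall>j<m. \<forall>k<m. j \<noteq> k \<longrightarrow>
        orth_supp dB (ptrA dA dB (kron (X j) (1\<^sub>m dB) * \<rho>))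
                     (ptrA dA dB (kron (X k) (1\<^sub>m dB) * \<rho>))"
    and S: "density dB \<sigma>"
  shows "D (liftA (meas m X) dA m dB \<rho>) (kron (1\<^sub>m m) \<sigma>) \<ge> 0"
proof -
  have Rp: "psd (dA*dB) \<rho>" using R unfolding density_def by auto
  have Rc: "\<rho> \<in> carrier_mat (dA*dB) (dA*dB)" using Rp unfolding psd_def by auto
  have Xc: "\<And>x. x < m \<Longrightarrow> X x \<in> carrier_mat dA dA" by (rule povm_carrier[OF P])
  have Sp: "psd dB \<sigma>" and St: "mtrace \<sigma> = 1" using S unfolding density_def by auto
  have Sc: "\<sigma> \<in> carrier_mat dB dB" using Sp unfolding psd_def by auto
  define rx where "rx = (\<lambda>x. ptrA dA dB (kron (X x) (1\<^sub>m dB) * \<rho>))"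
  have rxc: "\<And>x. rx x \<in> carrier_mat dB dB" unfolding rx_def ptrA_def by simp
  define Us where "Us = (\<lambda>x. U dB (rx x))"
  define Q where "Q = (\<lambda>x. Qm dB (Us x))"
  have Qc: "\<And>x. Q x \<in> carrier_mat dB dB" unfolding Q_def Qm_def by simp
  have Uo: "\<And>x. orthl dB (Us x)" unfolding Us_def by (rule U_props)
  have Qp: "\<forall>x<m. psd dB (Q x)" unfolding Q_def using Qm_psd[OF Uo] by simp
  have Q1p: "\<forall>x<m. Q x \<in> carrier_mat dB dB \<and> psd dB (1\<^sub>m dB - Q x)"
    unfolding Q_def using one_minus_Qm_psd[OF Uo] Qc[unfolded Q_def] by simp
  let ?L = "liftA (meas m X) dA m dB \<rho>"
  let ?K = "kron (1\<^sub>m m) \<sigma>"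
  have Ld: "density (m*dB) ?L" by (rule part1(1)[OF D P R])
  have Lp: "psd (m*dB) ?L" and Lt: "mtrace ?L = 1" using Ld unfolding density_def by auto
  have Lc: "?L \<in> carrier_mat (m*dB) (m*dB)" using Lp unfolding psd_def by auto
  have Kp: "psd (m*dB) ?K" by (rule psd_kron_one[OF Sp])
  have Kc: "?K \<in> carrier_mat (m*dB) (m*dB)" using Kp unfolding psd_def by auto
  have mpos: "m > 0"
  proof (rule ccontr)
    assume "\<not> m > 0"
    then have "m = 0" by simp
    then have "mtrace ?L = 0" unfolding mtrace_def by simp
    then show False using Lt by simp
  qed
  have Lent: "?L $$ (x*dB+\<beta>, x*dB+\<beta>') = rx x $$ (\<beta>,\<beta>')"
    if "x < m" "\<beta> < dB" "\<beta>' < dB" for x \<beta> \<beta>'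
    using that unfolding rx_def by (simp add: lift_meas_entry[OF Xc] rhox_entry[OF Xc Rc])
  define Pi where "Pi = BD m dB Q"
  have Pic: "Pi \<in> carrier_mat (m*dB) (m*dB)" unfolding Pi_def by (rule BD_carrier)
  have Pie: "\<And>i j. i < m*dB \<Longrightarrow> j < m*dB \<Longrightarrow> Pi $$ (i,j) = (if i div dB = j div dB then Q (i div dB) $$ (i mod dB, j mod dB) else 0)"
    unfolding Pi_def BD_def by simp
  define Y where "Y = (\<lambda>j::nat. if j = 0 then Pi else 1\<^sub>m (m*dB) - Pi)"
  have YP: "povm (m*dB) 2 Y" unfolding Y_def Pi_def by (rule BD_povm[OF Qp Q1p])
  have cp: "cptp (m*dB) 2 (meas 2 Y)" by (rule meas_cptp[OF YP])
  have mono: "D (meas 2 Y ?L) (meas 2 Y ?K) \<le> D ?L ?K"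
    using D cp Lp Kp unfolding relK_def by blast
  have tPL: "mtrace (Pi * ?L) = 1"
  proof -
    have "mtrace (Pi * ?L) = (\<Sum>x<m. \<Sum>\<beta><dB. \<Sum>\<beta>'<dB. Q x $$ (\<beta>,\<beta>') * ?L $$ (x*dB+\<beta>', x*dB+\<beta>))"
      by (rule trace_blockdiag[OF Pic Lc Pie])
    also have "\<dots> = (\<Sum>x<m. \<Sum>\<beta><dB. \<Sum>\<beta>'<dB. Q x $$ (\<beta>,\<beta>') * rx x $$ (\<beta>',\<beta>))"
      by (intro sum.cong refl) (simp add: Lent)
    also have "\<dots> = (\<Sum>x<m. \<Sum>\<beta><dB. rx x $$ (\<beta>,\<beta>))"
    proof (intro sum.cong refl)
      fix x \<beta> assume "x \<in> {..<m}" "\<beta> \<in> {..<dB}"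
      then show "(\<Sum>\<beta>'<dB. Q x $$ (\<beta>,\<beta>') * rx x $$ (\<beta>',\<beta>)) = rx x $$ (\<beta>,\<beta>)"
        unfolding Q_def Us_def using Qm_fix U_props(3) by simp
    qed
    also have "\<dots> = (\<Sum>x<m. \<Sum>\<beta><dB. ?L $$ (x*dB+\<beta>, x*dB+\<beta>))"
      by (intro sum.cong refl) (simp add: Lent)
    also have "\<dots> = mtrace ?L" unfolding mtrace_def by (simp add: sum_split_prod)
    finally show ?thesis using Lt by simp
  qed
  have t1L: "mtrace ((1\<^sub>m (m*dB) - Pi) * ?L) = 0" using mtrace_one_minus[OF Pic Lc] tPL Lt by simp
  define t where "t = mtrace (Pi * ?K)"
  have te: "t = (\<Sum>x<m. \<Sum>\<beta><dB. \<Sum>\<beta>'<dB. Q x $$ (\<beta>,\<beta>') * \<sigma> $$ (\<beta>',\<beta>))"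
  proof -
    have "t = (\<Sum>x<m. \<Sum>\<beta><dB. \<Sum>\<beta>'<dB. Q x $$ (\<beta>,\<beta>') * ?K $$ (x*dB+\<beta>', x*dB+\<beta>))"
      unfolding t_def by (rule trace_blockdiag[OF Pic Kc Pie])
    also have "\<dots> = (\<Sum>x<m. \<Sum>\<beta><dB. \<Sum>\<beta>'<dB. Q x $$ (\<beta>,\<beta>') * \<sigma> $$ (\<beta>',\<beta>))"
      by (intro sum.cong refl) (simp add: kron_one_entry[OF Sc])
    finally show ?thesis .
  qed
  have Spf: "psdf dB (\<lambda>i l. \<sigma> $$ (i,l))" using Sp unfolding psd_iff by auto
  have t0: "t \<ge> 0" unfolding te
  proof (rule sum_nonneg)
    fix x assume "x \<in> {..<m}"
    then have "psdf dB (\<lambda>i l. Q x $$ (i,l))" using Qp unfolding psd_iff by auto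
    then show "(\<Sum>\<beta><dB. \<Sum>\<beta>'<dB. Q x $$ (\<beta>,\<beta>') * \<sigma> $$ (\<beta>',\<beta>)) \<ge> 0"
      by (rule trace_prod_nonneg[OF _ Spf])
  qed
  have cross: "\<forall>x<m. \<forall>y<m. x \<noteq> y \<longrightarrow> (\<forall>k<length (Us x). \<forall>k'<length (Us y). ip dB (Us x ! k) (Us y ! k') = 0)"
  proof (intro allI impI)
    fix x y k k' assume xy: "x < m" "y < m" "x \<noteq> y" and k: "k < length (Us x)" "k' < length (Us y)"
    obtain z where z: "\<forall>i<dB. (Us x ! k) i = (\<Sum>l<dB. rx x $$ (i,l) * z l)"
      using U_props(2)[of dB "rx x"] k unfolding Us_def inrange_def by blast
    obtain z' where z': "\<forall>i<dB. (Us y ! k') i = (\<Sum>l<dB. rx y $$ (i,l) * z' l)"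
      using U_props(2)[of dB "rx y"] k unfolding Us_def inrange_def by blast
    have os: "orth_supp dB (rx x) (rx y)" using O xy unfolding rx_def by blast
    have "(rx x *\<^sub>v vec dB z) \<bullet>c (rx y *\<^sub>v vec dB z') = 0"
      using os unfolding orth_supp_def by simp
    moreover have "(rx x *\<^sub>v vec dB z) \<bullet>c (rx y *\<^sub>v vec dB z') = ip dB (Us x ! k) (Us y ! k')"
    proof -
      have dims: "dim_row (rx x) = dB" "dim_row (rx y) = dB" "dim_col (rx x) = dB" "dim_col (rx y) = dB"
        using rxc by auto
      show ?thesis
        unfolding ip_def using z z' by (auto simp: dims scalar_prod_def mult_mat_vec_def lessThan_atLeast0 intro!: sum.cong)
    qed
    ultimately show "ip dB (Us x ! k) (Us y ! k') = 0" by simp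
  qed
  have t1: "t \<le> 1"
  proof -
    have G: "psdf dB (\<lambda>i l. (if i = l then 1 else 0) - (\<Sum>x<m. Qm dB (Us x) $$ (i,l)))"
      by (rule global_psdf) (use Uo cross in auto)
    have "0 \<le> (\<Sum>i<dB. \<Sum>l<dB. ((if i = l then 1 else 0) - (\<Sum>x<m. Qm dB (Us x) $$ (i,l))) * \<sigma> $$ (l,i))"
      by (rule trace_prod_nonneg[OF G Spf])
    also have "\<dots> = (\<Sum>i<dB. \<Sum>l<dB. (if i = l then \<sigma> $$ (l,i) else 0)) - (\<Sum>i<dB. \<Sum>l<dB. \<Sum>x<m. Q x $$ (i,l) * \<sigma> $$ (l,i))"
    proof -
      have "(\<Sum>i<dB. \<Sum>l<dB. ((if i = l then 1 else 0) - (\<Sum>x<m. Qm dB (Us x) $$ (i,l))) * \<sigma> $$ (l,i))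
        = (\<Sum>i<dB. \<Sum>l<dB. (if i = l then \<sigma> $$ (l,i) else 0) - (\<Sum>x<m. Q x $$ (i,l) * \<sigma> $$ (l,i)))"
        unfolding Q_def by (intro sum.cong refl) (simp add: sum_distrib_right left_diff_distrib)
      then show ?thesis by (simp add: sum_subtractf)
    qed
    also have "(\<Sum>i<dB. \<Sum>l<dB. (if i = l then \<sigma> $$ (l,i) else 0)) = 1"
      using St Sc unfolding mtrace_def by (simp add: sum_if_eq')
    also have "(\<Sum>i<dB. \<Sum>l<dB. \<Sum>x<m. Q x $$ (i,l) * \<sigma> $$ (l,i)) = t"
    proof -
      have "(\<Sum>i<dB. \<Sum>l<dB. \<Sum>x<m. Q x $$ (i,l) * \<sigma> $$ (l,i)) = (\<Sum>i<dB. \<Sum>x<m. \<Sum>l<dB. Q x $$ (i,l) * \<sigma> $$ (l,i))"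
        by (rule sum.cong[OF refl], rule sum.swap)
      also have "\<dots> = (\<Sum>x<m. \<Sum>i<dB. \<Sum>l<dB. Q x $$ (i,l) * \<sigma> $$ (l,i))" by (rule sum.swap)
      finally show ?thesis unfolding te .
    qed
    finally show ?thesis by simp
  qed
  have tK: "mtrace ?K = of_nat m"
  proof -
    have "mtrace ?K = (\<Sum>x<m. \<Sum>\<beta><dB. ?K $$ (x*dB+\<beta>, x*dB+\<beta>))"
      unfolding mtrace_def using Kc by (simp add: sum_split_prod)
    also have "\<dots> = (\<Sum>x<m. mtrace \<sigma>)" unfolding mtrace_def using Sc by (simp add: kron_one_entry[OF Sc])
    finally show ?thesis using St by simp
  qed
  have t1K: "mtrace ((1\<^sub>m (m*dB) - Pi) * ?K) = of_nat m - t"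
    using mtrace_one_minus[OF Pic Kc] tK unfolding t_def by simp
  have mt: "of_nat m - t \<ge> 0"
  proof -
    have "(1::complex) \<le> of_nat m" using mpos by (simp add: less_eq_complex_def)
    then show ?thesis using t1 by simp
  qed
  have e1: "meas 2 Y ?L = four_block_mat (one1 1) (0\<^sub>m 1 1) (0\<^sub>m 1 1) (0\<^sub>m 1 1)"
  proof -
    have "one1 0 = 0\<^sub>m 1 1" unfolding one1_def by (rule eq_matI) auto
    then show ?thesis using meas2_four[OF Lc, of Y] tPL t1L unfolding Y_def by simp
  qed
  have e2: "meas 2 Y ?K = four_block_mat (one1 t) (0\<^sub>m 1 1) (0\<^sub>m 1 1) (one1 (of_nat m - t))"
    using meas2_four[OF Kc, of Y] t1K unfolding Y_def t_def by simp
  have S1: "psd 1 (one1 1)" by (rule psd_one1) (simp add: less_eq_complex_def)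
  have "D (meas 2 Y ?L) (meas 2 Y ?K) = D (one1 1) (one1 t)"
    unfolding e1 e2 using D S1 psd_one1[OF t0] psd_one1[OF mt] unfolding relK_def by blast
  moreover have "D (one1 1) (one1 t) \<ge> 0" by (rule D_one1_nonneg[OF D b t0 t1])
  ultimately show ?thesis using mono by simp
qed

theorem lemma10:
  fixes b :: real and D :: "complex mat \<Rightarrow> complex mat \<Rightarrow> ereal" and first :: bool
    and dA dB m :: nat and X :: "nat \<Rightarrow> complex mat" and \<rho> :: "complex mat"
  assumes "b > 1"
    and "relK b D"
    and "povm dA m X"
    and "density (dA * dB) \<rho>"
  shows "HK first D m dB (liftA (meas m X) dA m dB \<rho>) \<ge> 0 \<and>
    ((\<forall>j<m. \<forall>k<m. j \<noteq> k \<longrightarrow>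
        orth_supp dB (ptrA dA dB (kron (X j) (1\<^sub>m dB) * \<rho>))
                     (ptrA dA dB (kron (X k) (1\<^sub>m dB) * \<rho>)))
     \<longrightarrow> HK first D m dB (liftA (meas m X) dA m dB \<rho>) = 0)"
proof -
  let ?L = "liftA (meas m X) dA m dB \<rho>"
  let ?B = "ptrA dA dB \<rho>"
  note p1 = part1[OF assms(2,3,4)]
  have B: "density dB ?B" by (rule p1(2))
  have E: "ptrA m dB ?L = ?B" by (rule p1(3))
  have Dle: "D ?L (kron (1\<^sub>m m) ?B) \<le> 0" by (rule p1(4))
  have H0: "HK first D m dB ?L \<ge> 0"
  proof (cases first)
    case True
    then show ?thesis unfolding HK_def E using Dle by simp
  next
    case False
    have "- D ?L (kron (1\<^sub>m m) ?B) \<le> (SUP \<sigma> \<in> {\<sigma>. density dB \<sigma>}. - D ?L (kron (1\<^sub>m m) \<sigma>))"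
      by (rule SUP_upper) (use B in simp)
    moreover have "0 \<le> - D ?L (kron (1\<^sub>m m) ?B)" using Dle by simp
    ultimately have "0 \<le> (SUP \<sigma> \<in> {\<sigma>. density dB \<sigma>}. - D ?L (kron (1\<^sub>m m) \<sigma>))"
      by (rule order_trans[rotated])
    then show ?thesis unfolding HK_def using False by simp
  qed
  moreover have "HK first D m dB ?L = 0"
    if O: "\<forall>j<m. \<forall>k<m. j \<noteq> k \<longrightarrow>
        orth_supp dB (ptrA dA dB (kron (X j) (1\<^sub>m dB) * \<rho>))
                     (ptrA dA dB (kron (X k) (1\<^sub>m dB) * \<rho>))"
  proof -
    have G: "D ?L (kron (1\<^sub>m m) \<sigma>) \<ge> 0" if "density dB \<sigma>" for \<sigma>
      by (rule part2[OF assms(2,1,3,4) O that])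
    have "HK first D m dB ?L \<le> 0"
    proof (cases first)
      case True
      then show ?thesis unfolding HK_def E using G[OF B] by simp
    next
      case False
      have "(SUP \<sigma> \<in> {\<sigma>. density dB \<sigma>}. - D ?L (kron (1\<^sub>m m) \<sigma>)) \<le> 0"
        by (rule SUP_least) (use G in simp)
      then show ?thesis unfolding HK_def using False by simp
    qed
    then show ?thesis using H0 by simp
  qed
  ultimately show ?thesis by blast
qed

end
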